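(* Consider the delayed linear system of the context under assumptions (a1)–(a3). The system globally synchronizes with synchronized state \[ \omega^\star=\frac{\sum_{i=1}^N\gamma_i c_i g_i(y_i)}{\sum_{i=1}^N\gamma_i c_i+K\sum_{i=1}^N\sum_{j\in\mathcal N_i}\gamma_i a_{ij}\tau_{ij}} \] with all $\gamma_i>0$ if and only if $\mathscr G$ is strongly connected. Moreover, the synchronized state equals \[ \dot x_q^\star=\frac{\sum_{i=1}^N c_i g_i(y_i)}{\sum_{i=1}^N c_i+K\sum_{i=1}^N\sum_{j\in\mathcal N_i}a_{ij}\tau_{ij}},\qquad q=1,\dots,N, \] if and only if, in addition, $\mathscr G$ is balanced.
   Context: System: $\dot x_i(t)=g_i(y_i)+\frac{K}{c_i}\sum_{j\in\mathcal N_i}a_{ij}(x_j(t-\tau_{ij})-x_i(t))$ for $t>0$, $x_i(t)=\phi_i(t)$ for $t\in[-\tau,0]$, $i=1,\dots,N$; here $y_i\in\mathbb R$, $g_i:\mathbb R\to\mathbb R$, $a_{ij}\ge0$ for $i\ne j$ (possibly $a_{ij}\neq a_{ji}$), $\mathcal N_i=\{j\ne i:a_{ij}\ne0\}$. Assumptions: (a1) $K>0$, $c_i>0$; (a2) delays $0\le\tau_{ij}\le\tau:=\max_{i\neq j}\tau_{ij}<\infty$; (a3) $\phi_i$ continuous and bounded on $[-\tau,0]$. Digraph $\mathscr G$: vertices $\{1,\dots,N\}$, edge from $j$ to $i$ with weight $a_{ij}$ whenever $a_{ij}>0$. Adjacency $[\mathbf A]_{ij}=a_{ij}$, $\mathbf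 D=\mathrm{diag}(\sum_j a_{ij})_i$, Laplacian $\mathbf L=\mathbf D-\mathbf A$; $\boldsymbol\gamma$ is a left eigenvector of $\mathbf L$ for eigenvalue $0$ ($\boldsymbol\gamma^T\mathbf L=0$), with $\|\boldsymbol\gamma\|=1$ and nonnegative entries. $\mathscr G$ is strongly connected if every ordered pair of distinct nodes is joined by a directed path; $\mathscr G$ is balanced if $\sum_j a_{ij}=\sum_j a_{ji}$ for every node $i$. Global synchronization: there is a constant $\omega^\star$ and a solution with $\dot x_i^\star\equiv\omega^\star$ for all $i$, and for every admissible initial condition every solution satisfies $\dot x_i(t)\to\omega^\star$ as $t\to\infty$ for all $i$. *)

theory Defs
  imports "HOL-Analysis.Analysis"
begin

definition nodes :: "nat \<Rightarrow> nat set" where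
  "nodes N = {1..N}"

definition nbhd :: "nat \<Rightarrow> (nat \<Rightarrow> nat \<Rightarrow> real) \<Rightarrow> nat \<Rightarrow> nat set" where
  "nbhd N a i = {j \<in> nodes N. j \<noteq> i \<and> a i j \<noteq> 0}"

definition laplacian :: "nat \<Rightarrow> (nat \<Rightarrow> nat \<Rightarrow> real) \<Rightarrow> nat \<Rightarrow> nat \<Rightarrow> real" where
  "laplacian N a i j = (if i = j then (\<Sum>k\<in>nodes N. a i k) else 0) - a i j"

definition edges :: "nat \<Rightarrow> (nat \<Rightarrow> nat \<Rightarrow> real) \<Rightarrow> (nat \<times> nat) set" where
  "edges N a = {(j, i). i \<in> nodes N \<and> j \<in> nodes N \<and> i \<noteq> j \<and> a i j > 0}"

definition strongly_connected :: "nat \<Rightarrow> (nat \<Rightarrow> nat \<Rightarrow> real) \<Rightarrow> bool" where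
  "strongly_connected N a \<longleftrightarrow>
     (\<forall>i\<in>nodes N. \<forall>j\<in>nodes N. i \<noteq> j \<longrightarrow> (i, j) \<in> (edges N a)\<^sup>+)"

definition balanced :: "nat \<Rightarrow> (nat \<Rightarrow> nat \<Rightarrow> real) \<Rightarrow> bool" where
  "balanced N a \<longleftrightarrow> (\<forall>i\<in>nodes N. (\<Sum>j\<in>nodes N. a i j) = (\<Sum>j\<in>nodes N. a j i))"

definition max_delay :: "nat \<Rightarrow> (nat \<Rightarrow> nat \<Rightarrow> real) \<Rightarrow> real" where
  "max_delay N tau = Max (insert 0 {tau i j | i j. i \<in> nodes N \<and> j \<in> nodes N \<and> i \<noteq> j})"

definition admissible_init ::
  "nat \<Rightarrow> (nat \<Rightarrow> nat \<Rightarrow> real) \<Rightarrow> (nat \<Rightarrow> real \<Rightarrow> real) \<Rightarrow> bool" where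
  "admissible_init N tau \<phi> \<longleftrightarrow>
     (\<forall>i\<in>nodes N. continuous_on {- max_delay N tau..0} (\<phi> i)
                  \<and> bounded (\<phi> i ` {- max_delay N tau..0}))"

definition is_solution ::
  "nat \<Rightarrow> real \<Rightarrow> (nat \<Rightarrow> real) \<Rightarrow> (nat \<Rightarrow> nat \<Rightarrow> real) \<Rightarrow> (nat \<Rightarrow> nat \<Rightarrow> real)
   \<Rightarrow> (nat \<Rightarrow> real \<Rightarrow> real) \<Rightarrow> (nat \<Rightarrow> real)
   \<Rightarrow> (nat \<Rightarrow> real \<Rightarrow> real) \<Rightarrow> (nat \<Rightarrow> real \<Rightarrow> real) \<Rightarrow> bool" where
  "is_solution N K c a tau g y \<phi> x \<longleftrightarrow>
     (\<forall>i\<in>nodes N.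
        (\<forall>t\<in>{- max_delay N tau..0}. x i t = \<phi> i t)
      \<and> continuous_on {- max_delay N tau..} (x i)
      \<and> (\<forall>t>0. (x i has_real_derivative
              (g i (y i) + K / c i * (\<Sum>j\<in>nbhd N a i. a i j * (x j (t - tau i j) - x i t))))
              (at t)))"

definition globally_synchronizes_with ::
  "nat \<Rightarrow> real \<Rightarrow> (nat \<Rightarrow> real) \<Rightarrow> (nat \<Rightarrow> nat \<Rightarrow> real) \<Rightarrow> (nat \<Rightarrow> nat \<Rightarrow> real)
   \<Rightarrow> (nat \<Rightarrow> real \<Rightarrow> real) \<Rightarrow> (nat \<Rightarrow> real) \<Rightarrow> real \<Rightarrow> bool" where
  "globally_synchronizes_with N K c a tau g y \<omega> \<longleftrightarrow>
     (\<exists>\<phi> x. admissible_init N tau \<phi> \<and> is_solution N K c a tau g y \<phi> x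
            \<and> (\<forall>i\<in>nodes N. \<forall>t>0. (x i has_real_derivative \<omega>) (at t)))
   \<and> (\<forall>\<phi> x. admissible_init N tau \<phi> \<and> is_solution N K c a tau g y \<phi> x \<longrightarrow>
            (\<forall>i\<in>nodes N. ((\<lambda>t. deriv (x i) t) \<longlongrightarrow> \<omega>) at_top))"

definition omega_gamma ::
  "nat \<Rightarrow> real \<Rightarrow> (nat \<Rightarrow> real) \<Rightarrow> (nat \<Rightarrow> nat \<Rightarrow> real) \<Rightarrow> (nat \<Rightarrow> nat \<Rightarrow> real)
   \<Rightarrow> (nat \<Rightarrow> real \<Rightarrow> real) \<Rightarrow> (nat \<Rightarrow> real) \<Rightarrow> (nat \<Rightarrow> real) \<Rightarrow> real" where
  "omega_gamma N K c a tau g y \<gamma> =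
     (\<Sum>i\<in>nodes N. \<gamma> i * c i * g i (y i)) /
     ((\<Sum>i\<in>nodes N. \<gamma> i * c i) + K * (\<Sum>i\<in>nodes N. \<Sum>j\<in>nbhd N a i. \<gamma> i * a i j * tau i j))"

definition omega_bal ::
  "nat \<Rightarrow> real \<Rightarrow> (nat \<Rightarrow> real) \<Rightarrow> (nat \<Rightarrow> nat \<Rightarrow> real) \<Rightarrow> (nat \<Rightarrow> nat \<Rightarrow> real)
   \<Rightarrow> (nat \<Rightarrow> real \<Rightarrow> real) \<Rightarrow> (nat \<Rightarrow> real) \<Rightarrow> real" where
  "omega_bal N K c a tau g y =
     (\<Sum>i\<in>nodes N. c i * g i (y i)) /
     ((\<Sum>i\<in>nodes N. c i) + K * (\<Sum>i\<in>nodes N. \<Sum>j\<in>nbhd N a i. a i j * tau i j))"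

end

theory Submission
  imports Defs "Jordan_Normal_Form.Determinant"
begin

lemma solve_lin:
  fixes B :: "nat \<Rightarrow> nat \<Rightarrow> real" and r :: "nat \<Rightarrow> real"
  assumes inj: "\<And>v. (\<forall>j\<in>{1..N}. (\<Sum>i\<in>{1..N}. v i * B i j) = 0) \<Longrightarrow> (\<forall>i\<in>{1..N}. v i = 0)"
  shows "\<exists>b. \<forall>i\<in>{1..N}. (\<Sum>j\<in>{1..N}. B i j * b j) = r i"
proof -
  define Bm where "Bm = mat N N (\<lambda>(i,j). B (Suc i) (Suc j))"
  have Bc: "Bm \<in> carrier_mat N N" unfolding Bm_def by simp
  have Btc: "transpose_mat Bm \<in> carrier_mat N N" unfolding Bm_def by simp
  have "det (transpose_mat Bm) \<noteq> 0"
  proof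
    assume "det (transpose_mat Bm) = 0"
    then obtain v where v: "v \<in> carrier_vec N" "v \<noteq> 0\<^sub>v N" "transpose_mat Bm *\<^sub>v v = 0\<^sub>v N"
      using det_0_iff_vec_prod_zero[OF Btc] by blast
    define v' where "v' k = v $ (k - 1)" for k
    have "\<forall>j\<in>{1..N}. (\<Sum>i\<in>{1..N}. v' i * B i j) = 0"
    proof
      fix j assume j: "j \<in> {1..N}"
      then obtain j0 where j0: "j = Suc j0" "j0 < N" by (cases j) auto
      have "(transpose_mat Bm *\<^sub>v v) $ j0 = 0" using v(3) j0 by simp
      hence "(\<Sum>i<N. B (Suc i) (Suc j0) * v $ i) = 0"
        using j0 v(1) unfolding Bm_def by (simp add: scalar_prod_def atLeast0LessThan)
      moreover have "(\<Sum>i\<in>{1..N}. v' i * B i j) = (\<Sum>i<N. B (Suc i) (Suc j0) * v $ i)"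
        using j0 by (simp add: sum.atLeast1_atMost_eq[of _ N, simplified] v'_def mult.commute)
      ultimately show "(\<Sum>i\<in>{1..N}. v' i * B i j) = 0" by simp
    qed
    hence z: "\<forall>i\<in>{1..N}. v' i = 0" using inj by blast
    have "v = 0\<^sub>v N"
    proof (rule eq_vecI)
      fix i assume "i < dim_vec (0\<^sub>v N :: real vec)"
      hence "Suc i \<in> {1..N}" by simp
      hence "v' (Suc i) = 0" using z by blast
      thus "v $ i = 0\<^sub>v N $ i" using \<open>i < _\<close> unfolding v'_def by simp
    qed (use v in simp)
    with v(2) show False by simp
  qed
  hence dB: "det Bm \<noteq> 0" using det_transpose[OF Bc] by simp
  define rv where "rv = vec N (\<lambda>i. r (Suc i))"
  define bv where "bv = (1 / det Bm) \<cdot>\<^sub>v (adj_mat Bm *\<^sub>v rv)"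
  have adjc: "adj_mat Bm \<in> carrier_mat N N" using adj_mat(1)[OF Bc] .
  have rvc: "rv \<in> carrier_vec N" unfolding rv_def by simp
  have "Bm *\<^sub>v bv = (1 / det Bm) \<cdot>\<^sub>v (Bm *\<^sub>v (adj_mat Bm *\<^sub>v rv))"
    unfolding bv_def using Bc adjc rvc by (simp add: mult_mat_vec)
  also have "Bm *\<^sub>v (adj_mat Bm *\<^sub>v rv) = (Bm * adj_mat Bm) *\<^sub>v rv"
    using Bc adjc rvc by (simp add: assoc_mult_mat_vec)
  also have "\<dots> = (det Bm \<cdot>\<^sub>m 1\<^sub>m N) *\<^sub>v rv" using adj_mat(2)[OF Bc] by simp
  also have "\<dots> = det Bm \<cdot>\<^sub>v rv"
  proof (rule eq_vecI)
    fix i assume "i < dim_vec (det Bm \<cdot>\<^sub>v rv)"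
    hence i: "i < N" using rvc by simp
    have "(det Bm \<cdot>\<^sub>m 1\<^sub>m N *\<^sub>v rv) $ i = (\<Sum>ia = 0..<N. det Bm * (if ia = i then 1 else 0) * rv $ ia)"
      using i rvc by (auto simp: scalar_prod_def)
    also have "\<dots> = (\<Sum>ia = 0..<N. (if ia = i then det Bm * rv $ ia else 0))"
      by (rule sum.cong) auto
    also have "\<dots> = det Bm * rv $ i" using i by (simp add: sum.delta')
    finally show "(det Bm \<cdot>\<^sub>m 1\<^sub>m N *\<^sub>v rv) $ i = (det Bm \<cdot>\<^sub>v rv) $ i" using i rvc by simp
  qed (use rvc in simp)
  finally have bv: "Bm *\<^sub>v bv = rv" using dB rvc by (simp add: smult_smult_assoc)
  define b where "b k = bv $ (k - 1)" for k
  have "\<forall>i\<in>{1..N}. (\<Sum>j\<in>{1..N}. B i j * b j) = r i"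
  proof
    fix i assume i: "i \<in> {1..N}"
    then obtain i0 where i0: "i = Suc i0" "i0 < N" by (cases i) auto
    have dbv: "dim_vec bv = N" unfolding bv_def using adjc rvc by simp
    have "(Bm *\<^sub>v bv) $ i0 = r i" using bv i0 unfolding rv_def by simp
    moreover have "(Bm *\<^sub>v bv) $ i0 = (\<Sum>j<N. B (Suc i0) (Suc j) * bv $ j)"
      using i0 dbv unfolding Bm_def by (simp add: scalar_prod_def atLeast0LessThan)
    moreover have "(\<Sum>j\<in>{1..N}. B i j * b j) = (\<Sum>j<N. B (Suc i0) (Suc j) * bv $ j)"
      using i0 by (simp add: sum.atLeast1_atMost_eq[of _ N, simplified] b_def)
    ultimately show "(\<Sum>j\<in>{1..N}. B i j * b j) = r i" by simp
  qed
  thus ?thesis by blast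
qed



lemma finite_nodes[simp]: "finite (nodes N)" unfolding nodes_def by simp

lemma nbhd_sub: "j \<in> nbhd N a i \<Longrightarrow> j \<in> nodes N \<and> j \<noteq> i"
  unfolding nbhd_def by auto

lemma finite_nbhd[simp]: "finite (nbhd N a i)" unfolding nbhd_def by simp

lemma max_delay_ge:
  assumes "i \<in> nodes N" "j \<in> nodes N" "i \<noteq> j"
  shows "tau i j \<le> max_delay N tau"
proof -
  have fin: "finite {tau i j | i j. i \<in> nodes N \<and> j \<in> nodes N \<and> i \<noteq> j}"
  proof -
    have "{tau i j | i j. i \<in> nodes N \<and> j \<in> nodes N \<and> i \<noteq> j} \<subseteq> (\<lambda>(i,j). tau i j) ` (nodes N \<times> nodes N)"
      by auto
    thus ?thesis by (rule finite_subset) simp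
  qed
  show ?thesis unfolding max_delay_def using assms fin by (intro Max_ge) auto
qed

lemma max_delay_nonneg: "max_delay N tau \<ge> 0"
proof -
  have fin: "finite {tau i j | i j. i \<in> nodes N \<and> j \<in> nodes N \<and> i \<noteq> j}"
  proof -
    have "{tau i j | i j. i \<in> nodes N \<and> j \<in> nodes N \<and> i \<noteq> j} \<subseteq> (\<lambda>(i,j). tau i j) ` (nodes N \<times> nodes N)"
      by auto
    thus ?thesis by (rule finite_subset) simp
  qed
  show ?thesis unfolding max_delay_def using fin by (intro Max_ge) auto
qed

definition degs :: "nat \<Rightarrow> real \<Rightarrow> (nat \<Rightarrow> real) \<Rightarrow> (nat \<Rightarrow> nat \<Rightarrow> real) \<Rightarrow> nat \<Rightarrow> real" where
  "degs N K c a i = K / c i * (\<Sum>j\<in>nbhd N a i. a i j)"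

definition Dmax :: "nat \<Rightarrow> real \<Rightarrow> (nat \<Rightarrow> real) \<Rightarrow> (nat \<Rightarrow> nat \<Rightarrow> real) \<Rightarrow> real" where
  "Dmax N K c a = Max (insert 0 (degs N K c a ` nodes N))"

definition wmin :: "nat \<Rightarrow> real \<Rightarrow> (nat \<Rightarrow> real) \<Rightarrow> (nat \<Rightarrow> nat \<Rightarrow> real) \<Rightarrow> real" where
  "wmin N K c a = Min (insert 1 ((\<lambda>(j,i). K / c i * a i j) ` edges N a))"

definition Lc :: "nat \<Rightarrow> (nat \<Rightarrow> nat \<Rightarrow> real) \<Rightarrow> (nat \<Rightarrow> nat \<Rightarrow> real) \<Rightarrow> real" where
  "Lc N a tau = real (card (edges N a)) * (max_delay N tau + 1) + max_delay N tau"

definition eps0 :: "nat \<Rightarrow> real \<Rightarrow> (nat \<Rightarrow> real) \<Rightarrow> (nat \<Rightarrow> nat \<Rightarrow> real) \<Rightarrow> (nat \<Rightarrow> nat \<Rightarrow> real) \<Rightarrow> real" where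
  "eps0 N K c a tau = wmin N K c a ^ card (edges N a) * exp (- Dmax N K c a * Lc N a tau)"

lemma finite_edges[simp]: "finite (edges N a)"
proof -
  have "edges N a \<subseteq> nodes N \<times> nodes N" unfolding edges_def by auto
  thus ?thesis by (rule finite_subset) simp
qed

lemma Dmax_ge: "i \<in> nodes N \<Longrightarrow> degs N K c a i \<le> Dmax N K c a"
  unfolding Dmax_def by (intro Max_ge) auto

lemma Dmax_nonneg: "Dmax N K c a \<ge> 0"
  unfolding Dmax_def by (intro Max_ge) auto

lemma wmin_le1: "wmin N K c a \<le> 1"
  unfolding wmin_def by (intro Min_le) auto

lemma wmin_le: "(j, i) \<in> edges N a \<Longrightarrow> wmin N K c a \<le> K / c i * a i j"
  unfolding wmin_def by (intro Min_le) force+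

lemma wmin_pos:
  assumes "K > 0" "\<forall>i\<in>nodes N. c i > 0"
  shows "wmin N K c a > 0"
proof -
  have "\<forall>x\<in>insert 1 ((\<lambda>(j,i). K / c i * a i j) ` edges N a). x > 0"
    using assms unfolding edges_def by auto
  thus ?thesis unfolding wmin_def by (subst Min_gr_iff) auto
qed

lemma edges_mem: "(j, i) \<in> edges N a \<Longrightarrow> i \<in> nodes N \<and> j \<in> nodes N \<and> i \<noteq> j \<and> a i j > 0 \<and> j \<in> nbhd N a i"
  unfolding edges_def nbhd_def by auto

locale cons =
  fixes N :: nat and K :: real and c :: "nat \<Rightarrow> real" and a tau :: "nat \<Rightarrow> nat \<Rightarrow> real"
    and e :: "nat \<Rightarrow> real \<Rightarrow> real"
  assumes Kpos: "K > 0"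
    and cpos: "\<forall>i\<in>nodes N. c i > 0"
    and anonneg: "\<forall>i\<in>nodes N. \<forall>j\<in>nodes N. i \<noteq> j \<longrightarrow> a i j \<ge> 0"
    and tnonneg: "\<forall>i\<in>nodes N. \<forall>j\<in>nodes N. i \<noteq> j \<longrightarrow> tau i j \<ge> 0"
    and econt: "\<forall>i\<in>nodes N. continuous_on {- max_delay N tau..} (e i)"
    and ederiv: "\<forall>i\<in>nodes N. \<forall>t>0. (e i has_real_derivative
          (K / c i * (\<Sum>j\<in>nbhd N a i. a i j * (e j (t - tau i j) - e i t)))) (at t)"
begin

abbreviation "I \<equiv> nodes N"
abbreviation "Tm \<equiv> max_delay N tau"

lemma Tm_nonneg: "Tm \<ge> 0" by (rule max_delay_nonneg)

lemma tau_nb: "i \<in> I \<Longrightarrow> j \<in> nbhd N a i \<Longrightarrow> 0 \<le> tau i j \<and> tau i j \<le> Tm \<and> a i j \<ge> 0 \<and> j \<in> I \<and> j \<noteq> i"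
  using nbhd_sub[of j N a i] max_delay_ge[of i N j tau] tnonneg anonneg by auto

lemma neg_cons: "cons N K c a tau (\<lambda>i t. - e i t)"
proof
  show "\<forall>i\<in>I. continuous_on {- Tm..} (\<lambda>t. - e i t)"
    using econt by (auto intro: continuous_intros)
  show "\<forall>i\<in>I. \<forall>t>0. ((\<lambda>t. - e i t) has_real_derivative
          (K / c i * (\<Sum>j\<in>nbhd N a i. a i j * (- e j (t - tau i j) - - e i t)))) (at t)"
  proof (intro ballI allI impI)
    fix i t assume "i \<in> I" "(t::real) > 0"
    hence d: "(e i has_real_derivative
          (K / c i * (\<Sum>j\<in>nbhd N a i. a i j * (e j (t - tau i j) - e i t)))) (at t)"
      using ederiv by blast
    have eq: "K / c i * (\<Sum>j\<in>nbhd N a i. a i j * (- e j (t - tau i j) - - e i t))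
        = - (K / c i * (\<Sum>j\<in>nbhd N a i. a i j * (e j (t - tau i j) - e i t)))"
    proof -
      have "(\<Sum>j\<in>nbhd N a i. a i j * (- e j (t - tau i j) - - e i t)) = - (\<Sum>j\<in>nbhd N a i. a i j * (e j (t - tau i j) - e i t))"
        unfolding sum_negf[symmetric] by (rule sum.cong) (auto simp: algebra_simps)
      thus ?thesis by simp
    qed
    show "((\<lambda>t. - e i t) has_real_derivative
          (K / c i * (\<Sum>j\<in>nbhd N a i. a i j * (- e j (t - tau i j) - - e i t)))) (at t)"
      unfolding eq by (rule DERIV_minus[OF d])
  qed
qed (use Kpos cpos anonneg tnonneg in auto)

lemma invariance:
  assumes t0: "t0 \<ge> 0"
    and win: "\<forall>i\<in>I. \<forall>s\<in>{t0 - Tm..t0}. e i s \<le> M"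
  shows "\<forall>i\<in>I. \<forall>s\<ge>t0 - Tm. e i s \<le> M"
proof (intro ballI allI impI)
  fix i1 s1 assume i1: "i1 \<in> I" and s1: "s1 \<ge> t0 - Tm"
  show "e i1 s1 \<le> M"
  proof (cases "s1 \<le> t0")
    case True thus ?thesis using win i1 s1 by auto
  next
    case False
    hence s1t0: "s1 > t0" by simp
    show ?thesis
    proof (rule ccontr)
      assume "\<not> e i1 s1 \<le> M"
      hence big: "e i1 s1 > M" by simp
      define \<epsilon> where "\<epsilon> = (e i1 s1 - M) / (2 * (1 + s1 - t0))"
      have epos: "\<epsilon> > 0" unfolding \<epsilon>_def using big s1t0 by simp
      define g where "g s = M + \<epsilon> * (1 + s - t0)" for s
      have "g s1 = M + (e i1 s1 - M) / 2" unfolding g_def \<epsilon>_def using s1t0 by (simp add: field_simps)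
      hence gs1: "g s1 \<le> e i1 s1" using big by (simp add: field_simps)
      have gmono: "g u \<le> g v" if "u \<le> v" for u v unfolding g_def using epos that
        by (simp add: mult_left_mono)
      define S where "S = {s \<in> {t0..s1}. \<exists>i\<in>I. g s \<le> e i s}"
      have S_eq: "S = (\<Union>i\<in>I. {s \<in> {t0..s1}. g s \<le> e i s})" unfolding S_def by auto
      have "closed S" unfolding S_eq
      proof (intro closed_UN ballI finite_nodes)
        fix i assume "i \<in> I"
        have "continuous_on {t0..s1} (e i)"
          using econt \<open>i \<in> I\<close> Tm_nonneg t0 by (auto intro: continuous_on_subset)
        moreover have "continuous_on {t0..s1} g" unfolding g_def by (intro continuous_intros)
        ultimately show "closed {s \<in> {t0..s1}. g s \<le> e i s}"
          by (intro continuous_on_closed_Collect_le) auto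
      qed
      moreover have "s1 \<in> S" unfolding S_def using i1 gs1 s1t0 by auto
      moreover have "bdd_below S" unfolding S_def by (auto intro: bdd_belowI[of _ t0])
      ultimately have sS: "Inf S \<in> S" by (intro closed_contains_Inf) auto
      define ss where "ss = Inf S"
      have ssS: "ss \<in> S" using sS ss_def by simp
      have ss_le: "ss \<le> s" if "s \<in> S" for s unfolding ss_def
        using that \<open>bdd_below S\<close> by (rule cInf_lower)
      have ss_range: "t0 \<le> ss" "ss \<le> s1" using ssS unfolding S_def by auto
      have ss_gt: "ss > t0"
      proof (rule ccontr)
        assume "\<not> ss > t0"
        hence "ss = t0" using ss_range by simp
        then obtain i where "i \<in> I" "g t0 \<le> e i t0" using ssS unfolding S_def by auto
        moreover have "e i t0 \<le> M" using win \<open>i \<in> I\<close> Tm_nonneg by auto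
        moreover have "g t0 > M" unfolding g_def using epos by simp
        ultimately show False by simp
      qed
      have Ine: "I \<noteq> {}" using i1 by auto
      define mx where "mx = Max ((\<lambda>j. e j ss) ` I)"
      have "mx \<in> (\<lambda>j. e j ss) ` I" unfolding mx_def using Ine by (intro Max_in) auto
      then obtain im where im: "im \<in> I" "e im ss = mx" by auto
      have mxge: "e j ss \<le> mx" if "j \<in> I" for j
        unfolding mx_def using that by (intro Max_ge) auto
      obtain i2 where i2: "i2 \<in> I" "g ss \<le> e i2 ss" using ssS unfolding S_def by auto
      have gim: "g ss \<le> e im ss" using mxge[OF i2(1)] i2(2) im(2) by simp
      have before: "e j s \<le> e im ss" if "j \<in> I" "s \<ge> t0 - Tm" "s \<le> ss" for j s
      proof (cases "s = ss")
        case True thus ?thesis using mxge that im by simp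
      next
        case False
        hence slt: "s < ss" using that by simp
        show ?thesis
        proof (cases "s \<le> t0")
          case True
          hence "e j s \<le> M" using win that by auto
          moreover have "M \<le> g ss" unfolding g_def using epos ss_gt
            by (simp add: add_nonneg_nonneg)
          ultimately show ?thesis using gim by simp
        next
          case False
          have "s \<notin> S" using ss_le slt by force
          hence "e j s < g s" using that False ss_range slt unfolding S_def by auto
          also have "g s \<le> g ss" using slt by (intro gmono) simp
          finally show ?thesis using gim by simp
        qed
      qed
      define v where "v = K / c im * (\<Sum>j\<in>nbhd N a im. a im j * (e j (ss - tau im j) - e im ss))"
      have vle: "v \<le> 0"
      proof -
        have "(\<Sum>j\<in>nbhd N a im. a im j * (e j (ss - tau im j) - e im ss)) \<le> 0"
        proof (intro sum_nonpos)
          fix j assume j: "j \<in> nbhd N a im"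
          have tj: "0 \<le> tau im j \<and> tau im j \<le> Tm \<and> a im j \<ge> 0 \<and> j \<in> I \<and> j \<noteq> im"
            using tau_nb[OF im(1) j] .
          have "e j (ss - tau im j) \<le> e im ss"
            using tj ss_gt by (intro before) auto
          thus "a im j * (e j (ss - tau im j) - e im ss) \<le> 0"
            using tj by (simp add: mult_nonneg_nonpos)
        qed
        moreover have "K / c im > 0" using Kpos cpos im by simp
        ultimately show ?thesis unfolding v_def by (metis less_eq_real_def mult_nonneg_nonpos)
      qed
      have dv: "(e im has_real_derivative v) (at ss)"
        unfolding v_def using ederiv im(1) ss_gt t0 by auto
      have dg: "(g has_real_derivative \<epsilon>) (at ss)"
        unfolding g_def by (auto intro!: derivative_eq_intros)
      have df: "((\<lambda>s. e im s - g s) has_real_derivative (v - \<epsilon>)) (at ss)"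
        by (rule DERIV_diff[OF dv dg])
      obtain d where d: "d > 0" "\<forall>h>0. h < d \<longrightarrow> e im ss - g ss < e im (ss - h) - g (ss - h)"
        using DERIV_neg_dec_left[OF df] vle epos by auto
      define h where "h = min d (ss - t0) / 2"
      have h: "h > 0" "h < d" "ss - h \<ge> t0" "ss - h < ss" unfolding h_def using d ss_gt by (auto simp: min_def field_simps)
      have "e im (ss - h) - g (ss - h) > e im ss - g ss" using d h by auto
      moreover have "e im ss - g ss \<ge> 0" using gim by simp
      moreover have "ss - h \<notin> S" using ss_le h by force
      hence "e im (ss - h) < g (ss - h)" using h im ss_range unfolding S_def by auto
      ultimately show False by simp
    qed
  qed
qed


abbreviation "D \<equiv> Dmax N K c a"
abbreviation "w \<equiv> wmin N K c a"

lemma degs_nonneg: "i \<in> I \<Longrightarrow> degs N K c a i \<ge> 0"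
proof -
  assume i: "i \<in> I"
  have "(\<Sum>j\<in>nbhd N a i. a i j) \<ge> 0" using tau_nb[OF i] by (intro sum_nonneg) auto
  moreover have "K / c i > 0" using Kpos cpos i by auto
  ultimately show ?thesis unfolding degs_def by (intro mult_nonneg_nonneg) auto
qed

lemma hlemma:
  assumes i: "i \<in> I" and t0: "t0 \<ge> 0" and t1: "t0 \<le> t1" "t1 \<le> t" and B: "B \<ge> 0"
    and bnd: "\<forall>j\<in>I. \<forall>s\<ge>t0 - Tm. e j s \<le> M"
    and X: "\<forall>s. t1 < s \<longrightarrow> s < t \<longrightarrow>
         K / c i * (\<Sum>j\<in>nbhd N a i. a i j * (M - e j (s - tau i j))) \<ge> B * exp (- D * (s - t0))"
  shows "(M - e i t) * exp (D * (t - t0)) \<ge> (M - e i t1) * exp (D * (t1 - t0)) + B * (t - t1)"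
proof -
  define F where "F s = (M - e i s) * exp (D * (s - t0)) - B * s" for s
  have "F t1 \<le> F t"
  proof (rule DERIV_nonneg_imp_increasing_open[OF t1(2)])
    fix s assume s: "t1 < s" "s < t"
    hence spos: "s > 0" using t0 t1 by simp
    define v where "v = K / c i * (\<Sum>j\<in>nbhd N a i. a i j * (e j (s - tau i j) - e i s))"
    have dv: "(e i has_real_derivative v) (at s)" unfolding v_def using ederiv i spos by auto
    define E where "E = exp (D * (s - t0))"
    have dF: "(F has_real_derivative (- v * E + (M - e i s) * (E * D) - B)) (at s)"
      unfolding F_def E_def
      by (rule derivative_eq_intros dv refl | simp)+
    define X where "X = K / c i * (\<Sum>j\<in>nbhd N a i. a i j * (M - e j (s - tau i j)))"
    define S1 where "S1 = (\<Sum>j\<in>nbhd N a i. a i j * (e j (s - tau i j) - e i s))"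
    define Sa where "Sa = (\<Sum>j\<in>nbhd N a i. a i j)"
    define X0 where "X0 = (\<Sum>j\<in>nbhd N a i. a i j * (M - e j (s - tau i j)))"
    have eqS: "S1 = Sa * (M - e i s) - X0"
    proof -
      have "S1 = (\<Sum>j\<in>nbhd N a i. a i j * (M - e i s) - a i j * (M - e j (s - tau i j)))"
        unfolding S1_def by (rule sum.cong) (auto simp: algebra_simps)
      thus ?thesis unfolding Sa_def X0_def by (simp add: sum_subtractf sum_distrib_right)
    qed
    have veq: "- v = X - degs N K c a i * (M - e i s)"
    proof -
      have "- v = - (K / c i * S1)" unfolding v_def S1_def by simp
      also have "\<dots> = K / c i * X0 - K / c i * Sa * (M - e i s)" unfolding eqS by (simp add: diff_divide_distrib add_divide_distrib algebra_simps)
      finally show ?thesis unfolding X_def X0_def degs_def Sa_def by simp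
    qed
    have gap: "M - e i s \<ge> 0" using bnd i s t1 Tm_nonneg by auto
    have "degs N K c a i \<le> D" using Dmax_ge[OF i] .
    hence "degs N K c a i * (M - e i s) \<le> D * (M - e i s)" using gap by (rule mult_right_mono)
    hence "- v + (M - e i s) * D \<ge> X" using veq by (simp add: algebra_simps)
    moreover have "X \<ge> B * exp (- D * (s - t0))" unfolding X_def using X s by auto
    ultimately have "- v + (M - e i s) * D \<ge> B * exp (- D * (s - t0))" by simp
    moreover have "E > 0" unfolding E_def by simp
    ultimately have "E * (- v + (M - e i s) * D) \<ge> E * (B * exp (- D * (s - t0)))"
      by (simp add: mult_left_mono)
    also have "E * (B * exp (- D * (s - t0))) = B"
      unfolding E_def by (simp add: exp_add[symmetric] algebra_simps)
    finally have "- v * E + (M - e i s) * (E * D) - B \<ge> 0" by (simp add: algebra_simps)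
    thus "\<exists>y. (F has_real_derivative y) (at s) \<and> 0 \<le> y" using dF by blast
  next
    have "continuous_on {t1..t} (e i)"
      using econt i t0 t1 Tm_nonneg by (auto intro: continuous_on_subset)
    thus "continuous_on {t1..t} F" unfolding F_def by (intro continuous_intros)
  qed
  thus ?thesis unfolding F_def by (simp add: algebra_simps)
qed


lemma div_exp_le:
  fixes P Q x :: real
  assumes "P * exp x \<ge> Q"
  shows "P \<ge> Q * exp (- x)"
proof -
  have "Q * exp (- x) \<le> P * exp x * exp (- x)"
    using assms by (intro mult_right_mono) auto
  also have "\<dots> = P" by (simp add: exp_minus)
  finally show ?thesis .
qed

lemma w_pos: "w > 0" using wmin_pos[OF Kpos cpos] .

lemma propagate:
  assumes t0: "t0 \<ge> 0" and bnd: "\<forall>j\<in>I. \<forall>s\<ge>t0 - Tm. e j s \<le> M" and i0: "i0 \<in> I"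
    and del: "\<delta> \<ge> 0" "M - e i0 t0 \<ge> \<delta>"
  shows "(i0, i) \<in> (edges N a)^^k \<Longrightarrow> t \<ge> t0 + real k * (Tm + 1) \<Longrightarrow>
         M - e i t \<ge> \<delta> * w^k * exp (- D * (t - t0))"
proof (induction k arbitrary: i t)
  case 0
  hence ii: "i = i0" and tt: "t \<ge> t0" by auto
  have "(M - e i0 t) * exp (D * (t - t0)) \<ge> (M - e i0 t0) * exp (D * (t0 - t0)) + 0 * (t - t0)"
  proof (rule hlemma[OF i0 t0 order_refl tt order_refl bnd], intro allI impI)
    fix s assume s: "t0 < s" "s < t"
    have "(\<Sum>j\<in>nbhd N a i0. a i0 j * (M - e j (s - tau i0 j))) \<ge> 0"
    proof (intro sum_nonneg)
      fix j assume j: "j \<in> nbhd N a i0"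
      note tj = tau_nb[OF i0 j]
      have "e j (s - tau i0 j) \<le> M" using bnd tj s by auto
      thus "a i0 j * (M - e j (s - tau i0 j)) \<ge> 0" using tj by simp
    qed
    moreover have "K / c i0 \<ge> 0" using Kpos cpos i0 by auto
    ultimately have "K / c i0 * (\<Sum>j\<in>nbhd N a i0. a i0 j * (M - e j (s - tau i0 j))) \<ge> 0"
      by (rule mult_nonneg_nonneg[rotated])
    thus "K / c i0 * (\<Sum>j\<in>nbhd N a i0. a i0 j * (M - e j (s - tau i0 j))) \<ge> 0 * exp (- D * (s - t0))"
      by simp
  qed
  hence "(M - e i t) * exp (D * (t - t0)) \<ge> \<delta>" using del ii by simp
  hence "M - e i t \<ge> \<delta> * exp (- (D * (t - t0)))" by (rule div_exp_le)
  thus ?case by simp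
next
  case (Suc k)
  from Suc.prems(1) obtain j where j1: "(i0, j) \<in> (edges N a)^^k" and j2: "(j, i) \<in> edges N a"
    by (rule relpow_Suc_E)
  note em = edges_mem[OF j2]
  have i: "i \<in> I" using em by simp
  define t1 where "t1 = t0 + real k * (Tm + 1) + Tm"
  have t1ge: "t0 \<le> t1" unfolding t1_def using Tm_nonneg by simp
  have tt1: "t \<ge> t1 + 1" using Suc.prems(2) unfolding t1_def by (simp add: algebra_simps)
  define B where "B = \<delta> * w ^ Suc k"
  have B0: "B \<ge> 0" unfolding B_def using del w_pos by simp
  have "(M - e i t) * exp (D * (t - t0)) \<ge> (M - e i t1) * exp (D * (t1 - t0)) + B * (t - t1)"
  proof (rule hlemma[OF i t0 t1ge _ B0 bnd], use tt1 in simp, intro allI impI)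
    fix s assume s: "t1 < s" "s < t"
    note tj = tau_nb[OF i conjunct2[OF conjunct2[OF conjunct2[OF conjunct2[OF em]]]]]
    define G where "G = M - e j (s - tau i j)"
    have "s - tau i j \<ge> t0 + real k * (Tm + 1)" using s tj unfolding t1_def by simp
    hence G1: "G \<ge> \<delta> * w ^ k * exp (- D * (s - tau i j - t0))" unfolding G_def by (rule Suc.IH[OF j1])
    have "exp (- D * (s - t0)) \<le> exp (- D * (s - tau i j - t0))"
      using Dmax_nonneg[of N K c a] tj by (simp add: mult_nonneg_nonneg algebra_simps)
    hence "\<delta> * w ^ k * exp (- D * (s - t0)) \<le> \<delta> * w ^ k * exp (- D * (s - tau i j - t0))"
      using del w_pos by (intro mult_left_mono) auto
    hence G2: "G \<ge> \<delta> * w ^ k * exp (- D * (s - t0))" using G1 by linarith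
    have G0: "G \<ge> 0" using G2 del w_pos by (smt (verit) exp_gt_zero mult_nonneg_nonneg zero_le_power)
    have "(\<Sum>j\<in>nbhd N a i. a i j * (M - e j (s - tau i j))) \<ge> a i j * G"
      unfolding G_def
    proof (rule member_le_sum)
      show "j \<in> nbhd N a i" using em by simp
      fix x assume x: "x \<in> nbhd N a i - {j}"
      note tx = tau_nb[OF i, of x]
      have "e x (s - tau i x) \<le> M" using bnd tx x s t1ge Tm_nonneg by auto
      thus "a i x * (M - e x (s - tau i x)) \<ge> 0" using tx x by simp
    qed simp
    hence "K / c i * (\<Sum>j\<in>nbhd N a i. a i j * (M - e j (s - tau i j))) \<ge> K / c i * (a i j * G)"
      using Kpos cpos i by (intro mult_left_mono) auto
    moreover have "K / c i * (a i j * G) \<ge> w * G"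
    proof -
      have "w \<le> K / c i * a i j" using wmin_le[OF j2] .
      hence "w * G \<le> (K / c i * a i j) * G" using G0 by (rule mult_right_mono)
      thus ?thesis by simp
    qed
    moreover have "w * G \<ge> w * (\<delta> * w ^ k * exp (- D * (s - t0)))"
      using G2 w_pos by (intro mult_left_mono) auto
    ultimately show "K / c i * (\<Sum>j\<in>nbhd N a i. a i j * (M - e j (s - tau i j))) \<ge> B * exp (- D * (s - t0))"
      unfolding B_def by (simp add: algebra_simps)
  qed
  moreover have "(M - e i t1) * exp (D * (t1 - t0)) \<ge> 0" using bnd i t1ge Tm_nonneg by auto
  moreover have "B * (t - t1) \<ge> B" using B0 tt1 by (simp add: mult_left_mono[of 1 "t - t1" B, simplified])
  ultimately have "(M - e i t) * exp (D * (t - t0)) \<ge> B" by linarith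
  hence "M - e i t \<ge> B * exp (- (D * (t - t0)))" by (rule div_exp_le)
  thus ?case unfolding B_def by simp
qed


abbreviation "Lcc \<equiv> Lc N a tau"
abbreviation "ep \<equiv> eps0 N K c a tau"

lemma Lc_nonneg: "Lcc \<ge> 0" unfolding Lc_def using Tm_nonneg by simp

lemma eps0_pos: "ep > 0" unfolding eps0_def using w_pos by simp

lemma eps0_le1: "ep \<le> 1"
proof -
  have "w ^ card (edges N a) \<le> 1" using w_pos wmin_le1 by (intro power_le_one) auto
  moreover have "exp (- D * Lcc) \<le> 1" using Dmax_nonneg[of N K c a] Lc_nonneg by simp
  ultimately show ?thesis unfolding eps0_def using w_pos
    by (metis exp_gt_zero less_eq_real_def mult_le_one zero_le_power)
qed

lemma upper_contract:
  assumes SC: "strongly_connected N a" and t0: "t0 \<ge> 0"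
    and win: "\<forall>i\<in>I. \<forall>s\<in>{t0 - Tm..t0}. e i s \<le> M" and i0: "i0 \<in> I"
    and del: "\<delta> \<ge> 0" "M - e i0 t0 \<ge> \<delta>"
  shows "\<forall>i\<in>I. \<forall>s\<in>{t0 + Lcc - Tm..t0 + Lcc}. e i s \<le> M - \<delta> * ep"
proof (intro ballI)
  fix i s assume i: "i \<in> I" and s: "s \<in> {t0 + Lcc - Tm..t0 + Lcc}"
  have bnd: "\<forall>j\<in>I. \<forall>s\<ge>t0 - Tm. e j s \<le> M" using invariance[OF t0 win] .
  obtain k where k: "k \<le> card (edges N a)" "(i0, i) \<in> (edges N a)^^k"
  proof (cases "i = i0")
    case True thus ?thesis using that[of 0] by simp
  next
    case False
    hence "(i0, i) \<in> (edges N a)\<^sup>+" using SC i i0 unfolding strongly_connected_def by auto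
    thus ?thesis using that trancl_finite_eq_relpow[OF finite_edges[of N a]] by auto
  qed
  have "s \<ge> t0 + real k * (Tm + 1)"
  proof -
    have "real k * (Tm + 1) \<le> real (card (edges N a)) * (Tm + 1)"
      using k(1) Tm_nonneg by (intro mult_right_mono) auto
    moreover have "s \<ge> t0 + real (card (edges N a)) * (Tm + 1)" using s unfolding Lc_def by simp
    ultimately show ?thesis by linarith
  qed
  hence g: "M - e i s \<ge> \<delta> * w^k * exp (- D * (s - t0))"
    by (rule propagate[OF t0 bnd i0 del k(2)])
  have "w ^ card (edges N a) \<le> w ^ k" using w_pos wmin_le1 k(1) by (intro power_decreasing) auto
  moreover have "exp (- D * Lcc) \<le> exp (- D * (s - t0))"
    using s Dmax_nonneg[of N K c a] by (simp add: mult_left_mono)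
  ultimately have "w ^ card (edges N a) * exp (- D * Lcc) \<le> w ^ k * exp (- D * (s - t0))"
    using w_pos by (intro mult_mono) auto
  hence "\<delta> * ep \<le> \<delta> * (w ^ k * exp (- D * (s - t0)))"
    unfolding eps0_def using del by (intro mult_left_mono) auto
  thus "e i s \<le> M - \<delta> * ep" using g by (simp add: algebra_simps)
qed

end

lemma (in cons) contract:
  assumes SC: "strongly_connected N a" and one: "1 \<in> I" and t0: "t0 \<ge> 0"
    and win: "\<forall>i\<in>I. \<forall>s\<in>{t0 - Tm..t0}. m \<le> e i s \<and> e i s \<le> M"
  shows "\<exists>m' M'. m \<le> m' \<and> M' \<le> M \<and> M' - m' \<le> (1 - ep / 2) * (M - m) \<and>
           (\<forall>i\<in>I. \<forall>s\<ge>t0 + Lcc - Tm. m' \<le> e i s \<and> e i s \<le> M')"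
proof -
  interpret ne: cons N K c a tau "\<lambda>i t. - e i t" by (rule neg_cons)
  have winU: "\<forall>i\<in>I. \<forall>s\<in>{t0 - Tm..t0}. e i s \<le> M" using win by auto
  have winL: "\<forall>i\<in>I. \<forall>s\<in>{t0 - Tm..t0}. - e i s \<le> - m" using win by auto
  have mM: "m \<le> M" using win one Tm_nonneg by force
  have t0': "t0 + Lcc \<ge> 0" using t0 Lc_nonneg by simp
  have U: "\<forall>i\<in>I. \<forall>s\<ge>t0 - Tm. e i s \<le> M" using invariance[OF t0 winU] .
  have L: "\<forall>i\<in>I. \<forall>s\<ge>t0 - Tm. - e i s \<le> - m" using ne.invariance[OF t0 winL] by simp
  show ?thesis
  proof (cases "e 1 t0 \<le> (M + m) / 2")
    case True
    have "\<forall>i\<in>I. \<forall>s\<in>{t0 + Lcc - Tm..t0 + Lcc}. e i s \<le> M - (M - m) / 2 * ep"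
      by (rule upper_contract[OF SC t0 winU one]) (use True mM in auto)
    hence "\<forall>i\<in>I. \<forall>s\<ge>t0 + Lcc - Tm. e i s \<le> M - (M - m) / 2 * ep"
      by (intro invariance[OF t0']) auto
    moreover have "\<forall>i\<in>I. \<forall>s\<ge>t0 + Lcc - Tm. m \<le> e i s" using L Lc_nonneg by force
    ultimately show ?thesis using mM eps0_pos
      by (intro exI[of _ m] exI[of _ "M - (M - m) / 2 * ep"]) (auto simp: algebra_simps)
  next
    case False
    have "\<forall>i\<in>I. \<forall>s\<in>{t0 + Lcc - Tm..t0 + Lcc}. - e i s \<le> - m - (M - m) / 2 * ep"
      by (rule ne.upper_contract[OF SC t0 _ one, simplified]) (use winL False mM in auto)
    hence "\<forall>i\<in>I. \<forall>s\<ge>t0 + Lcc - Tm. - e i s \<le> - m - (M - m) / 2 * ep"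
      by (intro ne.invariance[OF t0', simplified]) auto
    moreover have "\<forall>i\<in>I. \<forall>s\<ge>t0 + Lcc - Tm. e i s \<le> M" using U Lc_nonneg by force
    ultimately show ?thesis using mM eps0_pos
      by (intro exI[of _ "m + (M - m) / 2 * ep"] exI[of _ M]) (auto simp: algebra_simps)
  qed
qed


lemma (in cons) oscillation:
  assumes SC: "strongly_connected N a" and one: "1 \<in> I" and eta: "\<eta> > 0"
  shows "\<exists>T m M. M - m \<le> \<eta> \<and> (\<forall>i\<in>I. \<forall>s\<ge>T. m \<le> e i s \<and> e i s \<le> M)"
proof -
  interpret ne: cons N K c a tau "\<lambda>i t. - e i t" by (rule neg_cons)
  define C where "C = (\<Union>i\<in>I. e i ` {- Tm..0})"
  have "compact C" unfolding C_def
  proof (intro compact_UN finite_nodes)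
    fix i assume "i \<in> I"
    hence "continuous_on {- Tm..0} (e i)" using econt by (auto intro: continuous_on_subset)
    thus "compact (e i ` {- Tm..0})" by (intro compact_continuous_image) auto
  qed
  hence "bounded C" by (rule compact_imp_bounded)
  then obtain B where B: "\<forall>x\<in>C. \<bar>x\<bar> \<le> B" unfolding bounded_real by auto
  have "e 1 0 \<in> C" unfolding C_def by (intro UN_I[OF one] imageI) (use Tm_nonneg in auto)
  hence B0: "B \<ge> 0" using B by (meson abs_ge_zero order_trans)
  have inC: "\<bar>e i s\<bar> \<le> B" if "i \<in> I" "s \<in> {- Tm..0}" for i s
  proof -
    have "e i s \<in> C" unfolding C_def by (intro UN_I[OF that(1)] imageI that(2))
    thus ?thesis using B by blast
  qed
  define \<rho> where "\<rho> = 1 - ep / 2"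
  have rho: "0 \<le> \<rho>" "\<rho> < 1" unfolding \<rho>_def using eps0_pos eps0_le1 by auto
  have claim: "\<exists>m M. M - m \<le> \<rho> ^ n * (2 * B) \<and> (\<forall>i\<in>I. \<forall>s\<ge>real n * Lcc - Tm. m \<le> e i s \<and> e i s \<le> M)" for n
  proof (induction n)
    case 0
    have w1: "\<forall>i\<in>I. \<forall>s\<in>{0 - Tm..0}. e i s \<le> B" using inC by (simp add: abs_le_iff)
    have w2: "\<forall>i\<in>I. \<forall>s\<in>{0 - Tm..0}. - e i s \<le> B" using inC by (simp add: abs_le_iff)
    have "\<forall>i\<in>I. \<forall>s\<ge>0 - Tm. e i s \<le> B" by (rule invariance[OF order_refl w1])
    moreover have "\<forall>i\<in>I. \<forall>s\<ge>0 - Tm. - e i s \<le> B" using ne.invariance[OF order_refl w2] by simp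
    ultimately have "\<forall>i\<in>I. \<forall>s\<ge>real 0 * Lcc - Tm. - B \<le> e i s \<and> e i s \<le> B" by force
    thus ?case by (intro exI[of _ "- B"] exI[of _ B]) simp
  next
    case (Suc n)
    then obtain m M where mM: "M - m \<le> \<rho> ^ n * (2 * B)"
      "\<forall>i\<in>I. \<forall>s\<ge>real n * Lcc - Tm. m \<le> e i s \<and> e i s \<le> M" by blast
    have t0: "real n * Lcc \<ge> 0" using Lc_nonneg by simp
    obtain m' M' where mM': "m \<le> m'" "M' \<le> M" "M' - m' \<le> \<rho> * (M - m)"
      "\<forall>i\<in>I. \<forall>s\<ge>real n * Lcc + Lcc - Tm. m' \<le> e i s \<and> e i s \<le> M'"
      using contract[OF SC one t0, of m M] mM(2) unfolding \<rho>_def by force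
    have "\<rho> * (M - m) \<le> \<rho> * (\<rho> ^ n * (2 * B))" using mM(1) rho by (intro mult_left_mono) auto
    hence "M' - m' \<le> \<rho> ^ Suc n * (2 * B)" using mM'(3) by simp
    moreover have "real (Suc n) * Lcc = real n * Lcc + Lcc" by (simp add: algebra_simps)
    ultimately show ?case using mM'(4) by (intro exI[of _ m'] exI[of _ M']) auto
  qed
  obtain n where n: "\<rho> ^ n < \<eta> / (2 * B + 1)" using real_arch_pow_inv[of "\<eta> / (2 * B + 1)" \<rho>] eta B0 rho by auto
  have "\<rho> ^ n * (2 * B) \<le> \<rho> ^ n * (2 * B + 1)" using rho by (intro mult_left_mono) auto
  also have "\<dots> < \<eta>" using n B0 by (simp add: field_simps)
  finally have "\<rho> ^ n * (2 * B) \<le> \<eta>" by simp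
  thus ?thesis using claim[of n] by (meson order_trans)
qed

lemma (in cons) consensus:
  assumes SC: "strongly_connected N a" and one: "1 \<in> I" and i: "i \<in> I"
  shows "((\<lambda>t. K / c i * (\<Sum>j\<in>nbhd N a i. a i j * (e j (t - tau i j) - e i t))) \<longlongrightarrow> 0) at_top"
proof (rule tendstoI)
  fix \<eta> :: real assume eta: "\<eta> > 0"
  define \<eta>' where "\<eta>' = \<eta> / (D + 1)"
  have D0: "D \<ge> 0" by (rule Dmax_nonneg)
  have eta': "\<eta>' > 0" unfolding \<eta>'_def using eta D0 by simp
  obtain T m M where TmM: "M - m \<le> \<eta>'" "\<forall>i\<in>I. \<forall>s\<ge>T. m \<le> e i s \<and> e i s \<le> M"
    using oscillation[OF SC one eta'] by blast
  show "\<forall>\<^sub>F t in at_top. dist (K / c i * (\<Sum>j\<in>nbhd N a i. a i j * (e j (t - tau i j) - e i t))) 0 < \<eta>"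
    unfolding eventually_at_top_linorder
  proof (intro exI allI impI)
    fix t assume t: "t \<ge> T + Tm"
    have "\<bar>\<Sum>j\<in>nbhd N a i. a i j * (e j (t - tau i j) - e i t)\<bar> \<le> (\<Sum>j\<in>nbhd N a i. \<bar>a i j * (e j (t - tau i j) - e i t)\<bar>)"
      by (rule sum_abs)
    also have "\<dots> \<le> (\<Sum>j\<in>nbhd N a i. a i j * \<eta>')"
    proof (rule sum_mono)
      fix j assume j: "j \<in> nbhd N a i"
      note tj = tau_nb[OF i j]
      have "m \<le> e j (t - tau i j) \<and> e j (t - tau i j) \<le> M" using TmM(2) tj t by auto
      moreover have "m \<le> e i t \<and> e i t \<le> M" using TmM(2) i t Tm_nonneg by auto
      ultimately have "\<bar>e j (t - tau i j) - e i t\<bar> \<le> \<eta>'" using TmM(1) by linarith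
      thus "\<bar>a i j * (e j (t - tau i j) - e i t)\<bar> \<le> a i j * \<eta>'" using tj
        by (simp add: abs_mult mult_left_mono)
    qed
    finally have s1: "\<bar>\<Sum>j\<in>nbhd N a i. a i j * (e j (t - tau i j) - e i t)\<bar> \<le> (\<Sum>j\<in>nbhd N a i. a i j) * \<eta>'"
      by (simp add: sum_distrib_right)
    have kc: "K / c i > 0" using Kpos cpos i by simp
    have "\<bar>K / c i * (\<Sum>j\<in>nbhd N a i. a i j * (e j (t - tau i j) - e i t))\<bar> = K / c i * \<bar>\<Sum>j\<in>nbhd N a i. a i j * (e j (t - tau i j) - e i t)\<bar>"
      by (simp only: abs_mult abs_of_pos[OF kc])
    also have "\<dots> \<le> K / c i * ((\<Sum>j\<in>nbhd N a i. a i j) * \<eta>')"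
      using s1 kc by (intro mult_left_mono) auto
    also have "\<dots> = degs N K c a i * \<eta>'" unfolding degs_def by simp
    also have "\<dots> \<le> D * \<eta>'" using Dmax_ge[OF i] eta' by (intro mult_right_mono) auto
    also have "\<dots> < \<eta>" unfolding \<eta>'_def using eta D0 by (simp add: field_simps)
    finally show "dist (K / c i * (\<Sum>j\<in>nbhd N a i. a i j * (e j (t - tau i j) - e i t))) 0 < \<eta>"
      by (simp add: dist_real_def)
  qed
qed



definition leftnull :: "nat \<Rightarrow> (nat \<Rightarrow> nat \<Rightarrow> real) \<Rightarrow> (nat \<Rightarrow> real) \<Rightarrow> bool" where
  "leftnull N a v \<longleftrightarrow> (\<forall>j\<in>nodes N. v j * (\<Sum>k\<in>nodes N - {j}. a j k) = (\<Sum>i\<in>nodes N - {j}. v i * a i j))"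

definition Pm :: "nat \<Rightarrow> (nat \<Rightarrow> nat \<Rightarrow> real) \<Rightarrow> nat \<Rightarrow> nat \<Rightarrow> real" where
  "Pm N a i j = (if i = j then - (\<Sum>k\<in>nodes N - {i}. a i k) else a i j)"

lemma nb_sum:
  assumes "i \<in> nodes N"
  shows "(\<Sum>j\<in>nbhd N a i. a i j * f j) = (\<Sum>j\<in>nodes N - {i}. a i j * f j)"
  by (rule sum.mono_neutral_left) (auto simp: nbhd_def)

lemma rowP:
  assumes i: "i \<in> nodes N"
  shows "(\<Sum>j\<in>nodes N. Pm N a i j * f j) = (\<Sum>j\<in>nodes N - {i}. a i j * (f j - f i))"
proof -
  have "(\<Sum>j\<in>nodes N. Pm N a i j * f j) = Pm N a i i * f i + (\<Sum>j\<in>nodes N - {i}. Pm N a i j * f j)"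
    using i by (simp add: sum.remove)
  also have "(\<Sum>j\<in>nodes N - {i}. Pm N a i j * f j) = (\<Sum>j\<in>nodes N - {i}. a i j * f j)"
    by (rule sum.cong) (auto simp: Pm_def)
  also have "Pm N a i i * f i = - (\<Sum>j\<in>nodes N - {i}. a i j * f i)"
    unfolding Pm_def by (simp add: sum_distrib_right)
  finally show ?thesis by (simp add: sum_subtractf algebra_simps)
qed

lemma colP:
  assumes j: "j \<in> nodes N"
  shows "(\<Sum>i\<in>nodes N. v i * Pm N a i j) = (\<Sum>i\<in>nodes N - {j}. v i * a i j) - v j * (\<Sum>k\<in>nodes N - {j}. a j k)"
proof -
  have "(\<Sum>i\<in>nodes N. v i * Pm N a i j) = v j * Pm N a j j + (\<Sum>i\<in>nodes N - {j}. v i * Pm N a i j)"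
    using j by (simp add: sum.remove)
  also have "(\<Sum>i\<in>nodes N - {j}. v i * Pm N a i j) = (\<Sum>i\<in>nodes N - {j}. v i * a i j)"
    by (rule sum.cong) (auto simp: Pm_def)
  finally show ?thesis unfolding Pm_def by simp
qed

lemma leftnull_P: "leftnull N a v \<longleftrightarrow> (\<forall>j\<in>nodes N. (\<Sum>i\<in>nodes N. v i * Pm N a i j) = 0)"
  unfolding leftnull_def using colP by auto

lemma rowP_sum0: "i \<in> nodes N \<Longrightarrow> (\<Sum>j\<in>nodes N. Pm N a i j) = 0"
  using rowP[of i N a "\<lambda>_. 1"] by simp

lemma leftnull_lin: "leftnull N a u \<Longrightarrow> leftnull N a v \<Longrightarrow> leftnull N a (\<lambda>i. u i - s * v i)"
  unfolding leftnull_P by (simp add: left_diff_distrib sum_subtractf sum_distrib_left[symmetric] mult.assoc)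

lemma zero_step:
  assumes ln: "leftnull N a v" and vn: "\<forall>i\<in>nodes N. v i \<ge> 0"
    and an: "\<forall>i\<in>nodes N. \<forall>j\<in>nodes N. i \<noteq> j \<longrightarrow> a i j \<ge> 0"
    and z: "z \<in> nodes N" "v z = 0" and e: "(z, y) \<in> edges N a"
  shows "v y = 0"
proof -
  have "(\<Sum>i\<in>nodes N - {z}. v i * a i z) = 0" using ln z unfolding leftnull_def by force
  moreover have "\<forall>i\<in>nodes N - {z}. v i * a i z \<ge> 0" using vn an z by auto
  ultimately have "\<forall>i\<in>nodes N - {z}. v i * a i z = 0" by (subst (asm) sum_nonneg_eq_0_iff) auto
  moreover have "y \<in> nodes N - {z}" "a y z > 0" using e unfolding edges_def by auto
  ultimately show ?thesis by auto
qed

lemma pos_all: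
  assumes SC: "strongly_connected N a" and ln: "leftnull N a v" and vn: "\<forall>i\<in>nodes N. v i \<ge> 0"
    and an: "\<forall>i\<in>nodes N. \<forall>j\<in>nodes N. i \<noteq> j \<longrightarrow> a i j \<ge> 0"
    and p: "p \<in> nodes N" "v p > 0"
  shows "\<forall>i\<in>nodes N. v i > 0"
proof (rule ccontr)
  assume "\<not> (\<forall>i\<in>nodes N. v i > 0)"
  then obtain z where z: "z \<in> nodes N" "v z = 0" using vn by force
  hence "z \<noteq> p" using p by auto
  hence zp: "(z, p) \<in> (edges N a)\<^sup>+" using SC z p unfolding strongly_connected_def by auto
  have "v y = 0" if "(z, y) \<in> (edges N a)\<^sup>+" for y
    using that
  proof (induction rule: trancl_induct)
    case (base y) thus ?case using zero_step[OF ln vn an z] by blast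
  next
    case (step y u)
    have "y \<in> nodes N" using step(2) unfolding edges_def by auto
    thus ?case using zero_step[OF ln vn an _ step(3) step(2)] by blast
  qed
  with zp p show False by auto
qed

lemma unique_null:
  assumes SC: "strongly_connected N a" and ln: "leftnull N a v" and lg: "leftnull N a g"
    and gp: "\<forall>i\<in>nodes N. g i > 0"
    and an: "\<forall>i\<in>nodes N. \<forall>j\<in>nodes N. i \<noteq> j \<longrightarrow> a i j \<ge> 0"
    and ne: "nodes N \<noteq> {}"
  shows "\<exists>s. \<forall>i\<in>nodes N. v i = s * g i"
proof -
  define s where "s = Min ((\<lambda>i. v i / g i) ` nodes N)"
  have "s \<in> (\<lambda>i. v i / g i) ` nodes N" unfolding s_def using ne by (intro Min_in) auto
  then obtain z where z: "z \<in> nodes N" "s = v z / g z" by auto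
  have sle: "s \<le> v i / g i" if "i \<in> nodes N" for i unfolding s_def using that by (intro Min_le) auto
  define u where "u i = v i - s * g i" for i
  have lu: "leftnull N a u" unfolding u_def by (intro leftnull_lin ln lg)
  have un: "\<forall>i\<in>nodes N. u i \<ge> 0"
  proof
    fix i assume i: "i \<in> nodes N"
    have "s \<le> v i / g i" using sle[OF i] .
    hence "s * g i \<le> v i" using gp i by (simp add: pos_le_divide_eq)
    thus "u i \<ge> 0" unfolding u_def by simp
  qed
  have uz: "u z = 0" unfolding u_def z(2) using gp z(1) by force
  have "\<forall>i\<in>nodes N. u i = 0"
  proof (rule ccontr)
    assume "\<not> (\<forall>i\<in>nodes N. u i = 0)"
    then obtain p where "p \<in> nodes N" "u p > 0" using un by force
    hence "\<forall>i\<in>nodes N. u i > 0" by (intro pos_all[OF SC lu un an])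
    thus False using uz z by force
  qed
  thus ?thesis unfolding u_def by (intro exI[of _ s]) auto
qed


lemma nodes_eq: "nodes N = {1..N}" unfolding nodes_def by simp

lemma solvable:
  assumes SC: "strongly_connected N a" and lg: "leftnull N a g" and gp: "\<forall>i\<in>nodes N. g i > 0"
    and an: "\<forall>i\<in>nodes N. \<forall>j\<in>nodes N. i \<noteq> j \<longrightarrow> a i j \<ge> 0"
    and ne: "nodes N \<noteq> {}" and rs: "(\<Sum>i\<in>nodes N. g i * r i) = 0"
  shows "\<exists>b. \<forall>i\<in>nodes N. (\<Sum>j\<in>nodes N - {i}. a i j * (b j - b i)) = r i"
proof -
  define B where "B i j = Pm N a i j + g j" for i j
  define G where "G = (\<Sum>i\<in>nodes N. g i)"
  have G: "G > 0" unfolding G_def using gp ne by (intro sum_pos) auto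
  have inj: "\<forall>i\<in>{1..N}. v i = 0" if h: "\<forall>j\<in>{1..N}. (\<Sum>i\<in>{1..N}. v i * B i j) = 0" for v
  proof -
    define V where "V = (\<Sum>i\<in>nodes N. v i)"
    have h': "(\<Sum>i\<in>nodes N. v i * Pm N a i j) + g j * V = 0" if j: "j \<in> nodes N" for j
    proof -
      have "(\<Sum>i\<in>nodes N. v i * B i j) = (\<Sum>i\<in>nodes N. v i * Pm N a i j) + g j * V"
        unfolding B_def V_def by (simp add: distrib_left sum.distrib sum_distrib_left mult.commute)
      thus ?thesis using h j unfolding nodes_eq by simp
    qed
    have "(\<Sum>j\<in>nodes N. \<Sum>i\<in>nodes N. v i * Pm N a i j) = (\<Sum>i\<in>nodes N. v i * (\<Sum>j\<in>nodes N. Pm N a i j))"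
      by (subst sum.swap) (simp add: sum_distrib_left)
    also have "\<dots> = 0" using rowP_sum0 by simp
    finally have s0: "(\<Sum>j\<in>nodes N. \<Sum>i\<in>nodes N. v i * Pm N a i j) = 0" .
    have "(\<Sum>j\<in>nodes N. (\<Sum>i\<in>nodes N. v i * Pm N a i j) + g j * V) = 0" using h' by simp
    hence "G * V = 0" using s0 unfolding G_def by (simp add: sum.distrib sum_distrib_right)
    hence V0: "V = 0" using G by simp
    hence "leftnull N a v" unfolding leftnull_P using h' by simp
    then obtain s where s: "\<forall>i\<in>nodes N. v i = s * g i" using unique_null[OF SC _ lg gp an ne] by blast
    hence "V = s * G" unfolding V_def G_def by (simp add: sum_distrib_left)
    hence "s = 0" using V0 G by simp
    thus ?thesis using s unfolding nodes_eq by simp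
  qed
  obtain b where b: "\<forall>i\<in>{1..N}. (\<Sum>j\<in>{1..N}. B i j * b j) = r i"
    using solve_lin[of N B r] inj by blast
  define Gb where "Gb = (\<Sum>j\<in>nodes N. g j * b j)"
  have bb: "(\<Sum>j\<in>nodes N. Pm N a i j * b j) + Gb = r i" if i: "i \<in> nodes N" for i
  proof -
    have "(\<Sum>j\<in>nodes N. B i j * b j) = (\<Sum>j\<in>nodes N. Pm N a i j * b j) + Gb"
      unfolding B_def Gb_def by (simp add: distrib_right sum.distrib)
    thus ?thesis using b i unfolding nodes_eq by simp
  qed
  have "(\<Sum>i\<in>nodes N. g i * ((\<Sum>j\<in>nodes N. Pm N a i j * b j) + Gb)) = 0"
    using rs bb by simp
  moreover have "(\<Sum>i\<in>nodes N. g i * (\<Sum>j\<in>nodes N. Pm N a i j * b j)) = (\<Sum>j\<in>nodes N. b j * (\<Sum>i\<in>nodes N. g i * Pm N a i j))"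
  proof -
    have "(\<Sum>i\<in>nodes N. g i * (\<Sum>j\<in>nodes N. Pm N a i j * b j)) = (\<Sum>i\<in>nodes N. \<Sum>j\<in>nodes N. b j * (g i * Pm N a i j))"
      by (simp add: sum_distrib_left mult_ac)
    also have "\<dots> = (\<Sum>j\<in>nodes N. \<Sum>i\<in>nodes N. b j * (g i * Pm N a i j))" by (rule sum.swap)
    also have "\<dots> = (\<Sum>j\<in>nodes N. b j * (\<Sum>i\<in>nodes N. g i * Pm N a i j))" by (simp add: sum_distrib_left)
    finally show ?thesis .
  qed
  moreover have "\<dots> = 0" using lg unfolding leftnull_P by simp
  ultimately have "G * Gb = 0" unfolding G_def by (simp add: distrib_left sum.distrib sum_distrib_right)
  hence "Gb = 0" using G by simp
  hence "\<forall>i\<in>nodes N. (\<Sum>j\<in>nodes N. Pm N a i j * b j) = r i" using bb by simp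
  thus ?thesis using rowP by (intro exI[of _ b]) auto
qed



lemma diff_sum:
  fixes K :: real and c :: "nat \<Rightarrow> real" and a tau :: "nat \<Rightarrow> nat \<Rightarrow> real" and u v :: "nat \<Rightarrow> real \<Rightarrow> real"
  shows "K / c i * (\<Sum>j\<in>S. a i j * (u j (t - tau i j) - u i t)) - K / c i * (\<Sum>j\<in>S. a i j * (v j (t - tau i j) - v i t))
   = K / c i * (\<Sum>j\<in>S. a i j * ((u j (t - tau i j) - v j (t - tau i j)) - (u i t - v i t)))"
proof -
  have "(\<Sum>j\<in>S. a i j * (u j (t - tau i j) - u i t)) - (\<Sum>j\<in>S. a i j * (v j (t - tau i j) - v i t))
      = (\<Sum>j\<in>S. a i j * ((u j (t - tau i j) - v j (t - tau i j)) - (u i t - v i t)))"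
    by (simp add: right_diff_distrib sum_subtractf)
  thus ?thesis unfolding right_diff_distrib[symmetric] by simp
qed

locale setting =
  fixes N :: nat and K :: real and c :: "nat \<Rightarrow> real"
    and a tau :: "nat \<Rightarrow> nat \<Rightarrow> real" and \<gamma> :: "nat \<Rightarrow> real"
  assumes a1K: "K > 0"
    and a1c: "\<forall>i\<in>nodes N. c i > 0"
    and anonneg: "\<forall>i\<in>nodes N. \<forall>j\<in>nodes N. i \<noteq> j \<longrightarrow> a i j \<ge> 0"
    and a2: "\<forall>i\<in>nodes N. \<forall>j\<in>nodes N. i \<noteq> j \<longrightarrow> tau i j \<ge> 0"
    and gamma_nonneg: "\<forall>i\<in>nodes N. \<gamma> i \<ge> 0"
    and gamma_norm: "sqrt (\<Sum>i\<in>nodes N. (\<gamma> i)\<^sup>2) = 1"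
    and gamma_left: "\<forall>j\<in>nodes N. (\<Sum>i\<in>nodes N. \<gamma> i * laplacian N a i j) = 0"
begin

lemma gamma_ex: "\<exists>p\<in>nodes N. \<gamma> p > 0"
proof (rule ccontr)
  assume "\<not> (\<exists>p\<in>nodes N. \<gamma> p > 0)"
  hence "\<forall>p\<in>nodes N. \<gamma> p = 0" using gamma_nonneg by force
  hence "(\<Sum>i\<in>nodes N. (\<gamma> i)\<^sup>2) = 0" by simp
  thus False using gamma_norm by simp
qed

lemma ne: "nodes N \<noteq> {}" using gamma_ex by auto

lemma one: "1 \<in> nodes N" using ne unfolding nodes_def by auto

lemma lg: "leftnull N a \<gamma>"
  unfolding leftnull_def
proof
  fix j assume j: "j \<in> nodes N"
  have "(\<Sum>i\<in>nodes N. \<gamma> i * laplacian N a i j)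
      = (\<Sum>i\<in>nodes N. (if i = j then \<gamma> j * (\<Sum>k\<in>nodes N. a j k) else 0) - \<gamma> i * a i j)"
    by (rule sum.cong) (auto simp: laplacian_def algebra_simps)
  also have "\<dots> = \<gamma> j * (\<Sum>k\<in>nodes N. a j k) - (\<Sum>i\<in>nodes N. \<gamma> i * a i j)"
    using j by (simp add: sum_subtractf sum.delta)
  also have "(\<Sum>k\<in>nodes N. a j k) = a j j + (\<Sum>k\<in>nodes N - {j}. a j k)"
    using j by (simp add: sum.remove)
  also have "(\<Sum>i\<in>nodes N. \<gamma> i * a i j) = \<gamma> j * a j j + (\<Sum>i\<in>nodes N - {j}. \<gamma> i * a i j)"
    using j by (simp add: sum.remove)
  finally show "\<gamma> j * (\<Sum>k\<in>nodes N - {j}. a j k) = (\<Sum>i\<in>nodes N - {j}. \<gamma> i * a i j)"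
    using gamma_left j by (simp add: algebra_simps)
qed

lemma gamma_pos: "strongly_connected N a \<Longrightarrow> \<forall>i\<in>nodes N. \<gamma> i > 0"
  using gamma_ex pos_all[OF _ lg gamma_nonneg anonneg] by blast

end


lemma (in setting) sync_SC:
  assumes SC: "strongly_connected N a"
  shows "globally_synchronizes_with N K c a tau g y (omega_gamma N K c a tau g y \<gamma>)"
proof -
  have gp: "\<forall>i\<in>nodes N. \<gamma> i > 0" using gamma_pos[OF SC] .
  define \<omega> where "\<omega> = omega_gamma N K c a tau g y \<gamma>"
  define A1 where "A1 = (\<Sum>i\<in>nodes N. \<gamma> i * c i)"
  define A2 where "A2 = (\<Sum>i\<in>nodes N. \<Sum>j\<in>nbhd N a i. \<gamma> i * a i j * tau i j)"
  define A3 where "A3 = (\<Sum>i\<in>nodes N. \<gamma> i * c i * g i (y i))"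
  have A1: "A1 > 0" unfolding A1_def using gp a1c ne by (intro sum_pos) auto
  have A2: "A2 \<ge> 0" unfolding A2_def
  proof (intro sum_nonneg)
    fix i j assume i: "i \<in> nodes N" and j: "j \<in> nbhd N a i"
    have "j \<in> nodes N" "j \<noteq> i" using nbhd_sub[OF j] by auto
    thus "\<gamma> i * a i j * tau i j \<ge> 0" using gp a2 anonneg i by auto
  qed
  have den: "A1 + K * A2 > 0" using A1 A2 a1K by (simp add: add_pos_nonneg)
  have om: "\<omega> * (A1 + K * A2) = A3" unfolding \<omega>_def omega_gamma_def A1_def[symmetric] A2_def[symmetric] A3_def[symmetric]
    using den by simp
  define r where "r i = (c i * \<omega> - c i * g i (y i)) / K + \<omega> * (\<Sum>j\<in>nbhd N a i. a i j * tau i j)" for i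
  have "(\<Sum>i\<in>nodes N. \<gamma> i * r i) = (\<omega> * A1 - A3) / K + \<omega> * A2"
    unfolding r_def A1_def A2_def A3_def
    by (simp add: distrib_left sum.distrib sum_divide_distrib[symmetric] sum_subtractf sum_distrib_left
        right_diff_distrib diff_divide_distrib mult_ac)
  also have "\<dots> = 0" using om a1K by (simp add: field_simps)
  finally have rs: "(\<Sum>i\<in>nodes N. \<gamma> i * r i) = 0" .
  obtain b where b: "\<forall>i\<in>nodes N. (\<Sum>j\<in>nodes N - {i}. a i j * (b j - b i)) = r i"
    using solvable[OF SC lg gp anonneg ne rs] by blast
  define xs where "xs i t = \<omega> * t + b i" for i t
  have eqn: "g i (y i) + K / c i * (\<Sum>j\<in>nbhd N a i. a i j * (xs j (t - tau i j) - xs i t)) = \<omega>"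
    if i: "i \<in> nodes N" for i t
  proof -
    have "(\<Sum>j\<in>nbhd N a i. a i j * (xs j (t - tau i j) - xs i t))
        = (\<Sum>j\<in>nbhd N a i. a i j * (b j - b i)) - \<omega> * (\<Sum>j\<in>nbhd N a i. a i j * tau i j)"
      unfolding xs_def by (simp add: sum_subtractf[symmetric] sum_distrib_left algebra_simps)
    also have "(\<Sum>j\<in>nbhd N a i. a i j * (b j - b i)) = r i" using b i nb_sum[OF i, of a "\<lambda>j. b j - b i"] by simp
    finally have S: "(\<Sum>j\<in>nbhd N a i. a i j * (xs j (t - tau i j) - xs i t)) = (c i * \<omega> - c i * g i (y i)) / K"
      unfolding r_def by simp
    have ci: "c i > 0" using a1c i by auto
    have "K / c i * ((c i * \<omega> - c i * g i (y i)) / K) = \<omega> - g i (y i)"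
      using ci a1K by (simp add: field_simps)
    thus ?thesis unfolding S by simp
  qed
  have part1: "\<exists>\<phi> x. admissible_init N tau \<phi> \<and> is_solution N K c a tau g y \<phi> x
            \<and> (\<forall>i\<in>nodes N. \<forall>t>0. (x i has_real_derivative \<omega>) (at t))"
  proof (intro exI conjI)
    have cont: "continuous_on S (xs i)" for S i unfolding xs_def by (intro continuous_intros)
    have der: "(xs i has_real_derivative \<omega>) (at t)" for i t
      unfolding xs_def by (auto intro!: derivative_eq_intros)
    show "admissible_init N tau xs" unfolding admissible_init_def
      using cont by (auto intro!: compact_imp_bounded compact_continuous_image)
    show "is_solution N K c a tau g y xs xs" unfolding is_solution_def
      using cont der eqn by auto
    show "\<forall>i\<in>nodes N. \<forall>t>0. (xs i has_real_derivative \<omega>) (at t)" using der by auto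
  qed
  have part2: "\<forall>\<phi> x. admissible_init N tau \<phi> \<and> is_solution N K c a tau g y \<phi> x \<longrightarrow>
            (\<forall>i\<in>nodes N. ((\<lambda>t. deriv (x i) t) \<longlongrightarrow> \<omega>) at_top)"
  proof (intro allI impI ballI)
    fix \<phi> x i assume sol: "admissible_init N tau \<phi> \<and> is_solution N K c a tau g y \<phi> x"
      and i: "i \<in> nodes N"
    define e where "e i t = x i t - xs i t" for i t
    have xd: "\<forall>i\<in>nodes N. \<forall>t>0. (x i has_real_derivative
              (g i (y i) + K / c i * (\<Sum>j\<in>nbhd N a i. a i j * (x j (t - tau i j) - x i t)))) (at t)"
      using sol unfolding is_solution_def by blast
    have keq: "g i (y i) + K / c i * (\<Sum>j\<in>nbhd N a i. a i j * (x j (t - tau i j) - x i t))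
        = \<omega> + K / c i * (\<Sum>j\<in>nbhd N a i. a i j * (e j (t - tau i j) - e i t))" if i: "i \<in> nodes N" for i t
    proof -
      have "g i (y i) + K / c i * (\<Sum>j\<in>nbhd N a i. a i j * (x j (t - tau i j) - x i t)) - \<omega>
          = K / c i * (\<Sum>j\<in>nbhd N a i. a i j * (x j (t - tau i j) - x i t))
            - K / c i * (\<Sum>j\<in>nbhd N a i. a i j * (xs j (t - tau i j) - xs i t))"
        using eqn[OF i, of t] by simp
      also have "\<dots> = K / c i * (\<Sum>j\<in>nbhd N a i. a i j * (e j (t - tau i j) - e i t))"
        unfolding e_def by (rule diff_sum)
      finally show ?thesis by simp
    qed
    have eeq: "e i = (\<lambda>t. x i t - xs i t)" for i by (rule ext) (simp add: e_def)
    have xsd: "(xs i has_real_derivative \<omega>) (at t)" for i t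
      unfolding xs_def by (auto intro!: derivative_eq_intros)
    have xsc: "continuous_on S (xs i)" for S i unfolding xs_def by (intro continuous_intros)
    have xc: "\<forall>i\<in>nodes N. continuous_on {- max_delay N tau..} (x i)"
      using sol unfolding is_solution_def by blast
    have xd1: "(x i has_real_derivative
              (g i (y i) + K / c i * (\<Sum>j\<in>nbhd N a i. a i j * (x j (t - tau i j) - x i t)))) (at t)"
      if "i \<in> nodes N" "t > 0" for i t using xd that by blast
    interpret cs: cons N K c a tau e
    proof
      show "\<forall>i\<in>nodes N. continuous_on {- max_delay N tau..} (e i)"
      proof
        fix i assume "i \<in> nodes N"
        hence "continuous_on {- max_delay N tau..} (x i)" using xc by blast
        thus "continuous_on {- max_delay N tau..} (e i)" unfolding eeq
          by (intro continuous_on_diff xsc)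
      qed
      show "\<forall>i\<in>nodes N. \<forall>t>0. (e i has_real_derivative
          (K / c i * (\<Sum>j\<in>nbhd N a i. a i j * (e j (t - tau i j) - e i t)))) (at t)"
      proof (intro ballI allI impI)
        fix i t assume i: "i \<in> nodes N" and t: "(t::real) > 0"
        have "(e i has_real_derivative
            ((g i (y i) + K / c i * (\<Sum>j\<in>nbhd N a i. a i j * (x j (t - tau i j) - x i t))) - \<omega>)) (at t)"
          unfolding eeq by (rule DERIV_diff[OF xd1[OF i t] xsd])
        thus "(e i has_real_derivative
            (K / c i * (\<Sum>j\<in>nbhd N a i. a i j * (e j (t - tau i j) - e i t)))) (at t)"
          using keq[OF i, of t] by simp
      qed
    qed (use a1K a1c anonneg a2 in auto)
    have lim: "((\<lambda>t. \<omega> + K / c i * (\<Sum>j\<in>nbhd N a i. a i j * (e j (t - tau i j) - e i t))) \<longlongrightarrow> \<omega> + 0) at_top"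
      by (intro tendsto_add tendsto_const cs.consensus[OF SC one i])
    have ev: "\<forall>\<^sub>F t in at_top. \<omega> + K / c i * (\<Sum>j\<in>nbhd N a i. a i j * (e j (t - tau i j) - e i t)) = deriv (x i) t"
      using eventually_gt_at_top[of 0]
    proof eventually_elim
      case (elim t)
      have "deriv (x i) t = g i (y i) + K / c i * (\<Sum>j\<in>nbhd N a i. a i j * (x j (t - tau i j) - x i t))"
        by (rule DERIV_imp_deriv[OF xd1[OF i elim]])
      thus ?case using keq[OF i, of t] by simp
    qed
    show "((\<lambda>t. deriv (x i) t) \<longlongrightarrow> \<omega>) at_top"
      using Lim_transform_eventually[OF lim ev] by simp
  qed
  show ?thesis unfolding globally_synchronizes_with_def \<omega>_def[symmetric] using part1 part2 by blast
qed


lemma block_sum: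
  assumes Q: "Q \<subseteq> nodes N" and lg: "leftnull N a g"
    and c1: "\<forall>i\<in>Q. \<forall>j\<in>nodes N - Q. a i j = 0" and c2: "\<forall>i\<in>nodes N - Q. \<forall>j\<in>Q. a i j = 0"
  shows "(\<Sum>i\<in>Q. g i * (\<Sum>j\<in>nbhd N a i. a i j * (b j - b i))) = 0"
proof -
  have row: "(\<Sum>j\<in>nbhd N a i. a i j * (b j - b i)) = (\<Sum>j\<in>Q. Pm N a i j * b j)" if i: "i \<in> Q" for i
  proof -
    have iI: "i \<in> nodes N" using i Q by auto
    have "(\<Sum>j\<in>nbhd N a i. a i j * (b j - b i)) = (\<Sum>j\<in>nodes N. Pm N a i j * b j)"
      using nb_sum[OF iI, of a "\<lambda>j. b j - b i"] rowP[OF iI, of a b] by simp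
    also have "\<dots> = (\<Sum>j\<in>Q. Pm N a i j * b j)"
    proof (rule sum.mono_neutral_right)
      show "\<forall>j\<in>nodes N - Q. Pm N a i j * b j = 0" using c1 i unfolding Pm_def by auto
    qed (use Q in auto)
    finally show ?thesis .
  qed
  have col: "(\<Sum>i\<in>Q. g i * Pm N a i j) = 0" if j: "j \<in> Q" for j
  proof -
    have jI: "j \<in> nodes N" using j Q by auto
    have "(\<Sum>i\<in>Q. g i * Pm N a i j) = (\<Sum>i\<in>nodes N. g i * Pm N a i j)"
    proof (rule sum.mono_neutral_left)
      show "\<forall>i\<in>nodes N - Q. g i * Pm N a i j = 0" using c2 j unfolding Pm_def by auto
    qed (use Q in auto)
    also have "\<dots> = 0" using lg jI unfolding leftnull_P by auto
    finally show ?thesis .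
  qed
  have "(\<Sum>i\<in>Q. g i * (\<Sum>j\<in>nbhd N a i. a i j * (b j - b i))) = (\<Sum>i\<in>Q. \<Sum>j\<in>Q. b j * (g i * Pm N a i j))"
    using row by (simp add: sum_distrib_left mult_ac)
  also have "\<dots> = (\<Sum>j\<in>Q. \<Sum>i\<in>Q. b j * (g i * Pm N a i j))" by (rule sum.swap)
  also have "\<dots> = (\<Sum>j\<in>Q. b j * (\<Sum>i\<in>Q. g i * Pm N a i j))" by (simp add: sum_distrib_left)
  also have "\<dots> = 0" using col by simp
  finally show ?thesis .
qed

lemma (in setting) sync_eq_Q:
  assumes Q: "Q \<subseteq> nodes N" "Q \<noteq> {}"
    and c1: "\<forall>i\<in>Q. \<forall>j\<in>nodes N - Q. a i j = 0" and c2: "\<forall>i\<in>nodes N - Q. \<forall>j\<in>Q. a i j = 0"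
    and gp: "\<forall>i\<in>nodes N. \<gamma> i > 0"
    and eq: "\<forall>i\<in>Q. \<omega> = q + K / c i * (\<Sum>j\<in>nbhd N a i. a i j * (b j - b i - \<omega> * tau i j))"
  shows "\<omega> * ((\<Sum>i\<in>Q. \<gamma> i * c i) + K * (\<Sum>i\<in>Q. \<gamma> i * (\<Sum>j\<in>nbhd N a i. a i j * tau i j)))
         = q * (\<Sum>i\<in>Q. \<gamma> i * c i)"
proof -
  define Y where "Y i = (\<Sum>j\<in>nbhd N a i. a i j * (b j - b i))" for i
  define Z where "Z i = (\<Sum>j\<in>nbhd N a i. a i j * tau i j)" for i
  have each: "\<gamma> i * c i * \<omega> = \<gamma> i * c i * q + K * (\<gamma> i * Y i) - K * \<omega> * (\<gamma> i * Z i)" if i: "i \<in> Q" for i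
  proof -
    have ci: "c i > 0" using a1c i Q by auto
    have sY: "(\<Sum>j\<in>nbhd N a i. a i j * (b j - b i - \<omega> * tau i j)) = Y i - \<omega> * Z i"
      unfolding Y_def Z_def by (simp add: sum_subtractf[symmetric] sum_distrib_left algebra_simps)
    have "\<omega> = q + K / c i * (\<Sum>j\<in>nbhd N a i. a i j * (b j - b i - \<omega> * tau i j))" using eq i by blast
    hence "\<omega> = q + K / c i * (Y i - \<omega> * Z i)" unfolding sY .
    hence "c i * \<omega> = c i * q + K * (Y i - \<omega> * Z i)" using ci by (simp add: field_simps)
    hence "\<gamma> i * (c i * \<omega>) = \<gamma> i * (c i * q + K * (Y i - \<omega> * Z i))" by simp
    thus ?thesis by (simp add: algebra_simps)
  qed
  have "(\<Sum>i\<in>Q. \<gamma> i * Y i) = 0" unfolding Y_def by (rule block_sum[OF Q(1) lg c1 c2])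
  moreover have "(\<Sum>i\<in>Q. \<gamma> i * c i * \<omega>) = (\<Sum>i\<in>Q. \<gamma> i * c i * q + K * (\<gamma> i * Y i) - K * \<omega> * (\<gamma> i * Z i))"
    using each by simp
  ultimately have "(\<Sum>i\<in>Q. \<gamma> i * c i) * \<omega> = (\<Sum>i\<in>Q. \<gamma> i * c i) * q - K * \<omega> * (\<Sum>i\<in>Q. \<gamma> i * Z i)"
    by (simp add: sum_subtractf sum.distrib sum_distrib_left[symmetric] sum_distrib_right[symmetric])
  thus ?thesis unfolding Z_def by (simp add: algebra_simps)
qed

lemma (in setting) nonSC:
  assumes gp: "\<forall>i\<in>nodes N. \<gamma> i > 0"
    and allsync: "\<forall>g y. globally_synchronizes_with N K c a tau g y (omega_gamma N K c a tau g y \<gamma>)"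
  shows "strongly_connected N a"
proof (rule ccontr)
  assume "\<not> strongly_connected N a"
  then obtain i0 j0 where ij: "i0 \<in> nodes N" "j0 \<in> nodes N" "i0 \<noteq> j0" "(i0, j0) \<notin> (edges N a)\<^sup>+"
    unfolding strongly_connected_def by blast
  define S where "S = {k \<in> nodes N. (k, j0) \<in> (edges N a)\<^sup>*}"
  have SI: "S \<subseteq> nodes N" unfolding S_def by auto
  have j0S: "j0 \<in> S" unfolding S_def using ij by auto
  have i0S: "i0 \<notin> S" unfolding S_def using ij by (auto simp: rtrancl_eq_or_trancl)
  have c1: "\<forall>i\<in>S. \<forall>j\<in>nodes N - S. a i j = 0"
  proof (intro ballI, rule ccontr)
    fix i j assume i: "i \<in> S" and j: "j \<in> nodes N - S" and ne0: "a i j \<noteq> 0"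
    have "i \<noteq> j" using i j by auto
    hence "a i j > 0" using anonneg i j SI ne0 by force
    hence "(j, i) \<in> edges N a" unfolding edges_def using i j SI \<open>i \<noteq> j\<close> by auto
    moreover have "(i, j0) \<in> (edges N a)\<^sup>*" using i unfolding S_def by auto
    ultimately have "(j, j0) \<in> (edges N a)\<^sup>*" by (rule converse_rtrancl_into_rtrancl)
    thus False using j unfolding S_def by auto
  qed
  have c2: "\<forall>i\<in>nodes N - S. \<forall>j\<in>S. a i j = 0"
  proof -
    have "\<forall>j\<in>S. (\<Sum>i\<in>nodes N. \<gamma> i * Pm N a i j) = 0" using lg SI unfolding leftnull_P by blast
    hence "(\<Sum>j\<in>S. \<Sum>i\<in>nodes N. \<gamma> i * Pm N a i j) = 0" by (rule sum.neutral)
    moreover have "(\<Sum>j\<in>S. \<Sum>i\<in>nodes N. \<gamma> i * Pm N a i j)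
        = (\<Sum>j\<in>S. \<Sum>i\<in>S. \<gamma> i * Pm N a i j) + (\<Sum>j\<in>S. \<Sum>i\<in>nodes N - S. \<gamma> i * Pm N a i j)"
    proof -
      have "(\<Sum>i\<in>nodes N. \<gamma> i * Pm N a i j) = (\<Sum>i\<in>S. \<gamma> i * Pm N a i j) + (\<Sum>i\<in>nodes N - S. \<gamma> i * Pm N a i j)" for j
        using SI by (metis add.commute finite_nodes sum.subset_diff)
      thus ?thesis by (simp add: sum.distrib)
    qed
    moreover have "(\<Sum>j\<in>S. \<Sum>i\<in>S. \<gamma> i * Pm N a i j) = 0"
    proof -
      have "(\<Sum>j\<in>S. \<Sum>i\<in>S. \<gamma> i * Pm N a i j) = (\<Sum>i\<in>S. \<Sum>j\<in>S. \<gamma> i * Pm N a i j)" by (rule sum.swap)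
      also have "\<dots> = (\<Sum>i\<in>S. \<gamma> i * (\<Sum>j\<in>S. Pm N a i j))" by (simp add: sum_distrib_left)
      also have "\<dots> = 0"
      proof (rule sum.neutral, rule ballI)
        fix i assume i: "i \<in> S"
        have "(\<Sum>j\<in>S. Pm N a i j) = (\<Sum>j\<in>nodes N. Pm N a i j)"
        proof (rule sum.mono_neutral_left)
          show "\<forall>j\<in>nodes N - S. Pm N a i j = 0" using c1 i unfolding Pm_def by auto
        qed (use SI in auto)
        also have "\<dots> = 0" using rowP_sum0 i SI by auto
        finally show "\<gamma> i * (\<Sum>j\<in>S. Pm N a i j) = 0" by simp
      qed
      finally show ?thesis .
    qed
    ultimately have z: "(\<Sum>j\<in>S. \<Sum>i\<in>nodes N - S. \<gamma> i * a i j) = 0"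
      by (simp add: Pm_def) (smt (verit, ccfv_SIG) DiffD2 sum.cong)
    have nn: "\<forall>j\<in>S. \<forall>i\<in>nodes N - S. \<gamma> i * a i j \<ge> 0" using gp anonneg SI by fastforce
    have finS: "finite S" using SI by (rule finite_subset) simp
    have "\<forall>j\<in>S. (\<Sum>i\<in>nodes N - S. \<gamma> i * a i j) = 0"
      using z nn finS by (subst (asm) sum_nonneg_eq_0_iff) (auto intro!: sum_nonneg)
    hence "\<forall>j\<in>S. \<forall>i\<in>nodes N - S. \<gamma> i * a i j = 0"
    proof (intro ballI)
      fix j i assume h: "\<forall>j\<in>S. (\<Sum>i\<in>nodes N - S. \<gamma> i * a i j) = 0" and j: "j \<in> S" and i: "i \<in> nodes N - S"
      have "(\<Sum>i\<in>nodes N - S. \<gamma> i * a i j) = 0" using h j by blast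
      moreover have "\<forall>i\<in>nodes N - S. \<gamma> i * a i j \<ge> 0" using nn j by blast
      ultimately show "\<gamma> i * a i j = 0" using i by (subst (asm) sum_nonneg_eq_0_iff) auto
    qed
    thus ?thesis using gp by (metis DiffD1 DiffI less_numeral_extra(3) mult_eq_0_iff)
  qed
  define g0 where "g0 i = (\<lambda>_::real. if i \<in> S then 0 else (1::real))" for i
  define y0 where "y0 = (\<lambda>_::nat. 0::real)"
  from allsync have "globally_synchronizes_with N K c a tau g0 y0 (omega_gamma N K c a tau g0 y0 \<gamma>)" by blast
  then obtain \<phi> x where sol: "is_solution N K c a tau g0 y0 \<phi> x"
    and xd: "\<forall>i\<in>nodes N. \<forall>t>0. (x i has_real_derivative (omega_gamma N K c a tau g0 y0 \<gamma>)) (at t)"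
    unfolding globally_synchronizes_with_def by blast
  define \<omega> where "\<omega> = omega_gamma N K c a tau g0 y0 \<gamma>"
  have lin: "\<exists>b. \<forall>t>0. x i t = \<omega> * t + b" if i: "i \<in> nodes N" for i
  proof -
    have "\<exists>b. \<forall>t\<in>{0<..}. x i t - \<omega> * t = b"
    proof (rule has_field_derivative_zero_constant)
      fix t :: real assume "t \<in> {0<..}"
      hence "(x i has_real_derivative \<omega>) (at t)" using xd i unfolding \<omega>_def by auto
      hence "((\<lambda>t. x i t - \<omega> * t) has_real_derivative (\<omega> - \<omega> * 1)) (at t)"
        by (auto intro!: derivative_eq_intros)
      thus "((\<lambda>t. x i t - \<omega> * t) has_real_derivative 0) (at t within {0<..})"
        by (simp add: has_field_derivative_at_within)
    qed simp
    thus ?thesis by (metis add.commute diff_eq_eq greaterThan_iff)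
  qed
  then obtain b where b: "\<forall>i\<in>nodes N. \<forall>t>0. x i t = \<omega> * t + b i" by metis
  define T where "T = max_delay N tau + 1"
  have eqn: "\<omega> = g0 i 0 + K / c i * (\<Sum>j\<in>nbhd N a i. a i j * (b j - b i - \<omega> * tau i j))"
    if i: "i \<in> nodes N" for i
  proof -
    have T0: "T > 0" unfolding T_def using max_delay_nonneg[of N tau] by simp
    have d1: "(x i has_real_derivative
          (g0 i (y0 i) + K / c i * (\<Sum>j\<in>nbhd N a i. a i j * (x j (T - tau i j) - x i T)))) (at T)"
      using sol i T0 unfolding is_solution_def by blast
    have d2: "(x i has_real_derivative \<omega>) (at T)" using xd i T0 unfolding \<omega>_def by blast
    have "(\<Sum>j\<in>nbhd N a i. a i j * (x j (T - tau i j) - x i T)) = (\<Sum>j\<in>nbhd N a i. a i j * (b j - b i - \<omega> * tau i j))"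
    proof (rule sum.cong[OF refl])
      fix j assume j: "j \<in> nbhd N a i"
      have jI: "j \<in> nodes N" "j \<noteq> i" using nbhd_sub[OF j] by auto
      have "tau i j \<le> max_delay N tau" using max_delay_ge[OF i jI(1)] jI(2) by auto
      hence "T - tau i j > 0" unfolding T_def by simp
      hence "x j (T - tau i j) = \<omega> * (T - tau i j) + b j" using b jI by auto
      moreover have "x i T = \<omega> * T + b i" using b i T0 by auto
      ultimately have "x j (T - tau i j) - x i T = b j - b i - \<omega> * tau i j"
        by (simp add: algebra_simps)
      thus "a i j * (x j (T - tau i j) - x i T) = a i j * (b j - b i - \<omega> * tau i j)" by simp
    qed
    thus ?thesis using DERIV_unique[OF d1 d2] unfolding y0_def by simp
  qed
  have posQ: "(\<Sum>i\<in>Q. \<gamma> i * c i) > 0" and nnQ: "(\<Sum>i\<in>Q. \<gamma> i * (\<Sum>j\<in>nbhd N a i. a i j * tau i j)) \<ge> 0"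
    if "Q \<subseteq> nodes N" "Q \<noteq> {}" for Q
  proof -
    show "(\<Sum>i\<in>Q. \<gamma> i * c i) > 0" using that gp a1c finite_subset[OF that(1)]
      by (intro sum_pos) auto
    show "(\<Sum>i\<in>Q. \<gamma> i * (\<Sum>j\<in>nbhd N a i. a i j * tau i j)) \<ge> 0"
    proof (intro sum_nonneg mult_nonneg_nonneg)
      fix i assume i: "i \<in> Q"
      show "\<gamma> i \<ge> 0" using gp i that by force
      fix j assume j: "j \<in> nbhd N a i"
      have "j \<in> nodes N" "j \<noteq> i" using nbhd_sub[OF j] by auto
      thus "a i j \<ge> 0" "tau i j \<ge> 0" using anonneg a2 i that by auto
    qed
  qed
  have e1: "\<omega> * ((\<Sum>i\<in>S. \<gamma> i * c i) + K * (\<Sum>i\<in>S. \<gamma> i * (\<Sum>j\<in>nbhd N a i. a i j * tau i j)))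
         = 0 * (\<Sum>i\<in>S. \<gamma> i * c i)"
  proof (rule sync_eq_Q[OF SI _ c1 c2 gp])
    show "S \<noteq> {}" using j0S by blast
    show "\<forall>i\<in>S. \<omega> = 0 + K / c i * (\<Sum>j\<in>nbhd N a i. a i j * (b j - b i - \<omega> * tau i j))"
    proof
      fix i assume i: "i \<in> S"
      hence "g0 i 0 = 0" unfolding g0_def by simp
      thus "\<omega> = 0 + K / c i * (\<Sum>j\<in>nbhd N a i. a i j * (b j - b i - \<omega> * tau i j))"
        using eqn[of i] i SI by auto
    qed
  qed
  have "\<omega> = 0"
  proof -
    have "(\<Sum>i\<in>S. \<gamma> i * c i) + K * (\<Sum>i\<in>S. \<gamma> i * (\<Sum>j\<in>nbhd N a i. a i j * tau i j)) > 0"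
    proof (rule add_pos_nonneg)
      have Sne: "S \<noteq> {}" using j0S by blast
      show "(\<Sum>i\<in>S. \<gamma> i * c i) > 0" using posQ[OF SI Sne] .
      show "K * (\<Sum>i\<in>S. \<gamma> i * (\<Sum>j\<in>nbhd N a i. a i j * tau i j)) \<ge> 0"
        using nnQ[OF SI Sne] a1K by simp
    qed
    thus ?thesis using e1 by simp
  qed
  have SI2: "nodes N - S \<subseteq> nodes N" by auto
  have ne2: "nodes N - S \<noteq> {}" using ij i0S by auto
  have c1': "\<forall>i\<in>nodes N - S. \<forall>j\<in>nodes N - (nodes N - S). a i j = 0" using c2 SI by auto
  have c2': "\<forall>i\<in>nodes N - (nodes N - S). \<forall>j\<in>nodes N - S. a i j = 0" using c1 SI by auto
  have e2: "\<omega> * ((\<Sum>i\<in>nodes N - S. \<gamma> i * c i) + K * (\<Sum>i\<in>nodes N - S. \<gamma> i * (\<Sum>j\<in>nbhd N a i. a i j * tau i j)))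
         = 1 * (\<Sum>i\<in>nodes N - S. \<gamma> i * c i)"
  proof (rule sync_eq_Q[OF SI2 ne2 c1' c2' gp])
    show "\<forall>i\<in>nodes N - S. \<omega> = 1 + K / c i * (\<Sum>j\<in>nbhd N a i. a i j * (b j - b i - \<omega> * tau i j))"
    proof
      fix i assume i: "i \<in> nodes N - S"
      hence "g0 i 0 = 1" unfolding g0_def by simp
      thus "\<omega> = 1 + K / c i * (\<Sum>j\<in>nbhd N a i. a i j * (b j - b i - \<omega> * tau i j))"
        using eqn[of i] i by auto
    qed
  qed
  thus False using \<open>\<omega> = 0\<close> posQ[OF SI2 ne2] by simp
qed


lemma sync_unique:
  assumes one: "1 \<in> nodes N"
    and s1: "globally_synchronizes_with N K c a tau g y \<omega>1"
    and s2: "globally_synchronizes_with N K c a tau g y \<omega>2"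
  shows "\<omega>1 = \<omega>2"
proof -
  obtain \<phi> x where sol: "admissible_init N tau \<phi> \<and> is_solution N K c a tau g y \<phi> x"
    and xd: "\<forall>i\<in>nodes N. \<forall>t>0. (x i has_real_derivative \<omega>1) (at t)"
    using s1 unfolding globally_synchronizes_with_def by blast
  have l2: "((\<lambda>t. deriv (x 1) t) \<longlongrightarrow> \<omega>2) at_top"
    using s2 sol one unfolding globally_synchronizes_with_def by blast
  have ev: "\<forall>\<^sub>F t in at_top. \<omega>1 = deriv (x 1) t"
    using eventually_gt_at_top[of 0]
  proof eventually_elim
    case (elim t)
    thus ?case using xd one by (metis DERIV_imp_deriv)
  qed
  have l1: "((\<lambda>t. deriv (x 1) t) \<longlongrightarrow> \<omega>1) at_top"
    using Lim_transform_eventually[OF tendsto_const ev] .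
  show ?thesis using tendsto_unique[OF _ l1 l2] by simp
qed

lemma ratio_scale:
  fixes s X C K Z :: real
  assumes "s > 0"
  shows "X / (C + K * Z) = (s * X) / (s * C + K * (s * Z))"
proof -
  have "s * C + K * (s * Z) = s * (C + K * Z)" by (simp add: algebra_simps)
  thus ?thesis using assms by simp
qed

lemma (in setting) balanced_part:
  assumes SC: "strongly_connected N a"
  shows "(\<forall>g y. globally_synchronizes_with N K c a tau g y (omega_bal N K c a tau g y)) \<longleftrightarrow> balanced N a"
proof -
  have gp: "\<forall>i\<in>nodes N. \<gamma> i > 0" using gamma_pos[OF SC] .
  have gs: "globally_synchronizes_with N K c a tau g y (omega_gamma N K c a tau g y \<gamma>)" for g y
    by (rule sync_SC[OF SC])
  have iff: "(\<forall>g y. globally_synchronizes_with N K c a tau g y (omega_bal N K c a tau g y)) \<longleftrightarrow>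
      (\<forall>g y. omega_bal N K c a tau g y = omega_gamma N K c a tau g y \<gamma>)"
    using gs sync_unique[OF one] by metis
  define Z where "Z = (\<Sum>i\<in>nodes N. \<Sum>j\<in>nbhd N a i. a i j * tau i j)"
  have Z0: "Z \<ge> 0" unfolding Z_def
  proof (intro sum_nonneg)
    fix i j assume i: "i \<in> nodes N" and j: "j \<in> nbhd N a i"
    have "j \<in> nodes N" "j \<noteq> i" using nbhd_sub[OF j] by auto
    thus "a i j * tau i j \<ge> 0" using anonneg a2 i by auto
  qed
  have Db: "(\<Sum>i\<in>nodes N. c i) + K * Z > 0"
    using a1c ne a1K Z0 by (intro add_pos_nonneg sum_pos) auto
  define Zg where "Zg = (\<Sum>i\<in>nodes N. \<Sum>j\<in>nbhd N a i. \<gamma> i * a i j * tau i j)"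
  have Zg0: "Zg \<ge> 0" unfolding Zg_def
  proof (intro sum_nonneg)
    fix i j assume i: "i \<in> nodes N" and j: "j \<in> nbhd N a i"
    have "j \<in> nodes N" "j \<noteq> i" using nbhd_sub[OF j] by auto
    thus "\<gamma> i * a i j * tau i j \<ge> 0" using anonneg a2 gp i by auto
  qed
  have Dg: "(\<Sum>i\<in>nodes N. \<gamma> i * c i) + K * Zg > 0"
    using a1c ne a1K Zg0 gp by (intro add_pos_nonneg sum_pos) auto
  have bal_iff: "balanced N a \<longleftrightarrow> leftnull N a (\<lambda>_. 1)"
  proof -
    have "(\<Sum>j\<in>nodes N. a i j) = (\<Sum>j\<in>nodes N. a j i) \<longleftrightarrow>
          1 * (\<Sum>k\<in>nodes N - {i}. a i k) = (\<Sum>j\<in>nodes N - {i}. 1 * a j i)" if i: "i \<in> nodes N" for i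
    proof -
      have "(\<Sum>j\<in>nodes N. a i j) = a i i + (\<Sum>k\<in>nodes N - {i}. a i k)" using i by (simp add: sum.remove)
      moreover have "(\<Sum>j\<in>nodes N. a j i) = a i i + (\<Sum>j\<in>nodes N - {i}. a j i)" using i by (simp add: sum.remove)
      ultimately show ?thesis by simp
    qed
    thus ?thesis unfolding balanced_def leftnull_def by auto
  qed
  show ?thesis
  proof
    assume "\<forall>g y. globally_synchronizes_with N K c a tau g y (omega_bal N K c a tau g y)"
    hence eq: "\<forall>g y. omega_bal N K c a tau g y = omega_gamma N K c a tau g y \<gamma>" using iff by blast
    define s where "s = ((\<Sum>i\<in>nodes N. \<gamma> i * c i) + K * Zg) / ((\<Sum>i\<in>nodes N. c i) + K * Z)"
    have gs_const: "\<gamma> p = s" if p: "p \<in> nodes N" for p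
    proof -
      define g1 where "g1 i = (\<lambda>_::real. if i = p then 1 / c i else 0)" for i
      define y1 where "y1 = (\<lambda>_::nat. 0::real)"
      have n1: "(\<Sum>i\<in>nodes N. c i * g1 i (y1 i)) = 1"
      proof -
        have "(\<Sum>i\<in>nodes N. c i * g1 i (y1 i)) = (\<Sum>i\<in>nodes N. if i = p then 1 else 0)"
          by (rule sum.cong) (use a1c in \<open>auto simp: g1_def\<close>)
        thus ?thesis using p by simp
      qed
      have n2: "(\<Sum>i\<in>nodes N. \<gamma> i * c i * g1 i (y1 i)) = \<gamma> p"
      proof -
        have "(\<Sum>i\<in>nodes N. \<gamma> i * c i * g1 i (y1 i)) = (\<Sum>i\<in>nodes N. if i = p then \<gamma> p else 0)"
          by (rule sum.cong) (use a1c in \<open>auto simp: g1_def\<close>)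
        thus ?thesis using p by simp
      qed
      have "omega_bal N K c a tau g1 y1 = omega_gamma N K c a tau g1 y1 \<gamma>" using eq by blast
      hence "1 / ((\<Sum>i\<in>nodes N. c i) + K * Z) = \<gamma> p / ((\<Sum>i\<in>nodes N. \<gamma> i * c i) + K * Zg)"
        unfolding omega_bal_def omega_gamma_def n1 n2 Z_def Zg_def .
      thus ?thesis unfolding s_def using Db Dg by (simp add: field_simps)
    qed
    have "leftnull N a (\<lambda>_. 1)" unfolding leftnull_def
    proof
      fix j assume j: "j \<in> nodes N"
      have "\<gamma> j * (\<Sum>k\<in>nodes N - {j}. a j k) = (\<Sum>i\<in>nodes N - {j}. \<gamma> i * a i j)"
        using lg j unfolding leftnull_def by blast
      moreover have "(\<Sum>i\<in>nodes N - {j}. \<gamma> i * a i j) = (\<Sum>i\<in>nodes N - {j}. s * a i j)"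
        by (rule sum.cong) (auto simp: gs_const)
      ultimately have "s * (\<Sum>k\<in>nodes N - {j}. a j k) = s * (\<Sum>i\<in>nodes N - {j}. a i j)"
        using gs_const[OF j] by (simp add: sum_distrib_left)
      moreover have "s > 0" using gs_const[OF j] gp j by auto
      ultimately show "1 * (\<Sum>k\<in>nodes N - {j}. a j k) = (\<Sum>i\<in>nodes N - {j}. 1 * a i j)" by simp
    qed
    thus "balanced N a" using bal_iff by simp
  next
    assume "balanced N a"
    hence l1: "leftnull N a (\<lambda>_. 1)" using bal_iff by simp
    obtain s where s: "\<forall>i\<in>nodes N. \<gamma> i = s * 1"
      using unique_null[OF SC lg l1 _ anonneg ne] by auto
    have spos: "s > 0" using s gp one by force
    have "omega_bal N K c a tau g y = omega_gamma N K c a tau g y \<gamma>" for g y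
    proof -
      have e1: "(\<Sum>i\<in>nodes N. \<gamma> i * c i * g i (y i)) = s * (\<Sum>i\<in>nodes N. c i * g i (y i))"
        using s by (simp add: sum_distrib_left mult.assoc)
      have e2: "(\<Sum>i\<in>nodes N. \<gamma> i * c i) = s * (\<Sum>i\<in>nodes N. c i)"
        using s by (simp add: sum_distrib_left)
      have e3: "(\<Sum>i\<in>nodes N. \<Sum>j\<in>nbhd N a i. \<gamma> i * a i j * tau i j) = s * Z"
        unfolding Z_def using s by (simp add: sum_distrib_left mult.assoc)
      show ?thesis unfolding omega_bal_def omega_gamma_def e1 e2 e3 Z_def[symmetric]
        by (rule ratio_scale[OF spos])
    qed
    thus "\<forall>g y. globally_synchronizes_with N K c a tau g y (omega_bal N K c a tau g y)"
      using iff by blast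
  qed
qed

theorem corollary1:
  fixes N :: nat and K :: real and c :: "nat \<Rightarrow> real"
    and a tau :: "nat \<Rightarrow> nat \<Rightarrow> real" and \<gamma> :: "nat \<Rightarrow> real"
  assumes a1K: "K > 0"
    and a1c: "\<forall>i\<in>nodes N. c i > 0"
    and anonneg: "\<forall>i\<in>nodes N. \<forall>j\<in>nodes N. i \<noteq> j \<longrightarrow> a i j \<ge> 0"
    and a2: "\<forall>i\<in>nodes N. \<forall>j\<in>nodes N. i \<noteq> j \<longrightarrow> tau i j \<ge> 0"
    and gamma_nonneg: "\<forall>i\<in>nodes N. \<gamma> i \<ge> 0"
    and gamma_norm: "sqrt (\<Sum>i\<in>nodes N. (\<gamma> i)\<^sup>2) = 1"
    and gamma_left: "\<forall>j\<in>nodes N. (\<Sum>i\<in>nodes N. \<gamma> i * laplacian N a i j) = 0"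
  shows "(((\<forall>g y. globally_synchronizes_with N K c a tau g y (omega_gamma N K c a tau g y \<gamma>))
            \<and> (\<forall>i\<in>nodes N. \<gamma> i > 0))
          \<longleftrightarrow> strongly_connected N a)
       \<and> (strongly_connected N a \<longrightarrow>
          ((\<forall>g y. globally_synchronizes_with N K c a tau g y (omega_bal N K c a tau g y))
           \<longleftrightarrow> balanced N a))"
proof -
  interpret st: setting N K c a tau \<gamma>
    using assms by (unfold_locales) auto
  show ?thesis
    using st.nonSC st.sync_SC st.gamma_pos st.balanced_part by blast
qed


end
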